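(* Let $k$ be an algebraically closed field of characteristic zero, let $p(z)\in k[z]$ be a polynomial of degree $2$ with simple roots, and let $D_p\subset\mathbb{A}^3$ be the surface $xy=p(z)$. Then the bracket width of the simple Lie algebra $\mathrm{Lie}_{\mathrm{LND}}(D_p)$ is at most two.
   Context: $\mathrm{Lie}_{\mathrm{LND}}(D_p)$ denotes the Lie subalgebra of $\mathrm{Vec}(D_p)$ generated by all locally nilpotent vector fields (vector fields whose associated $k$-derivation $\partial$ of $\mathcal{O}(D_p)$ satisfies: each $f$ is killed by some power of $\partial$). The bracket width of a Lie algebra $L$ is the supremum over $a\in[L,L]$ of the smallest number $m$ such that $a$ is a sum of $m$ brackets of elements of $L$. *)

theory Defs
  imports "HOL-Computational_Algebra.Polynomial"
begin

definition alg_closed :: "('a::field) itself \<Rightarrow> bool" where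
  "alg_closed _ \<longleftrightarrow> (\<forall>q :: 'a poly. degree q \<ge> 1 \<longrightarrow> (\<exists>x. poly q x = 0))"

inductive_set poly_fun3 :: "('a::comm_ring_1 \<times> 'a \<times> 'a \<Rightarrow> 'a) set" where
  pf_const: "(\<lambda>_. c) \<in> poly_fun3"
| pf_x: "(\<lambda>(x, y, z). x) \<in> poly_fun3"
| pf_y: "(\<lambda>(x, y, z). y) \<in> poly_fun3"
| pf_z: "(\<lambda>(x, y, z). z) \<in> poly_fun3"
| pf_add: "f \<in> poly_fun3 \<Longrightarrow> g \<in> poly_fun3 \<Longrightarrow> (\<lambda>v. f v + g v) \<in> poly_fun3"
| pf_mult: "f \<in> poly_fun3 \<Longrightarrow> g \<in> poly_fun3 \<Longrightarrow> (\<lambda>v. f v * g v) \<in> poly_fun3"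

definition surf :: "'a::field poly \<Rightarrow> ('a \<times> 'a \<times> 'a) set" where
  "surf p = {(x, y, z). x * y = poly p z}"

text \<open>Coordinate ring O(D_p): restrictions of polynomial functions to D_p,
  extended by 0 off D_p (over an algebraically closed field the reduced
  irreducible surface is determined by its points).\<close>
definition coord_ring :: "'a::field poly \<Rightarrow> ('a \<times> 'a \<times> 'a \<Rightarrow> 'a) set" where
  "coord_ring p = {(\<lambda>v. if v \<in> surf p then f v else 0) | f. f \<in> poly_fun3}"

type_synonym 'a vfield = "('a \<times> 'a \<times> 'a \<Rightarrow> 'a) \<Rightarrow> ('a \<times> 'a \<times> 'a \<Rightarrow> 'a)"

text \<open>k-derivations of O(D_p) (= algebraic vector fields on D_p); normalised
  to be zero on functions outside O(D_p), so that equality of vector fields is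
  equality of HOL functions.\<close>
definition is_vfield :: "'a::field poly \<Rightarrow> 'a vfield \<Rightarrow> bool" where
  "is_vfield p D \<longleftrightarrow>
     (\<forall>f \<in> coord_ring p. D f \<in> coord_ring p)
   \<and> (\<forall>f. f \<notin> coord_ring p \<longrightarrow> D f = (\<lambda>_. 0))
   \<and> (\<forall>f \<in> coord_ring p. \<forall>g \<in> coord_ring p. D (\<lambda>v. f v + g v) = (\<lambda>v. D f v + D g v))
   \<and> (\<forall>c. \<forall>f \<in> coord_ring p. D (\<lambda>v. c * f v) = (\<lambda>v. c * D f v))
   \<and> (\<forall>f \<in> coord_ring p. \<forall>g \<in> coord_ring p.
        D (\<lambda>v. f v * g v) = (\<lambda>v. f v * D g v + g v * D f v))"

definition vf_zero :: "'a::field vfield" where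
  "vf_zero = (\<lambda>f v. 0)"

definition vf_add :: "'a::field vfield \<Rightarrow> 'a vfield \<Rightarrow> 'a vfield" where
  "vf_add D E = (\<lambda>f v. D f v + E f v)"

definition vf_smult :: "'a::field \<Rightarrow> 'a vfield \<Rightarrow> 'a vfield" where
  "vf_smult c D = (\<lambda>f v. c * D f v)"

definition vf_bracket :: "'a::field vfield \<Rightarrow> 'a vfield \<Rightarrow> 'a vfield" where
  "vf_bracket D E = (\<lambda>f v. D (E f) v - E (D f) v)"

definition is_lnd :: "'a::field poly \<Rightarrow> 'a vfield \<Rightarrow> bool" where
  "is_lnd p D \<longleftrightarrow> is_vfield p D \<and>
     (\<forall>f \<in> coord_ring p. \<exists>n. (D ^^ n) f = (\<lambda>_. 0))"

inductive_set lie_lnd :: "'a::field poly \<Rightarrow> 'a vfield set" for p where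
  ll_gen: "is_lnd p D \<Longrightarrow> D \<in> lie_lnd p"
| ll_zero: "vf_zero \<in> lie_lnd p"
| ll_add: "D \<in> lie_lnd p \<Longrightarrow> E \<in> lie_lnd p \<Longrightarrow> vf_add D E \<in> lie_lnd p"
| ll_smult: "D \<in> lie_lnd p \<Longrightarrow> vf_smult c D \<in> lie_lnd p"
| ll_bracket: "D \<in> lie_lnd p \<Longrightarrow> E \<in> lie_lnd p \<Longrightarrow> vf_bracket D E \<in> lie_lnd p"

inductive_set derived :: "'a::field vfield set \<Rightarrow> 'a vfield set" for L where
  der_br: "D \<in> L \<Longrightarrow> E \<in> L \<Longrightarrow> vf_bracket D E \<in> derived L"
| der_zero: "vf_zero \<in> derived L"
| der_add: "D \<in> derived L \<Longrightarrow> E \<in> derived L \<Longrightarrow> vf_add D E \<in> derived L"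
| der_smult: "D \<in> derived L \<Longrightarrow> vf_smult c D \<in> derived L"

text \<open>Bracket width at most m: every element of [L,L] is a sum of m brackets
  of elements of L (fewer brackets are covered since [0,0] = 0 and 0 \<in> L).\<close>
definition bracket_width_le :: "'a::field vfield set \<Rightarrow> nat \<Rightarrow> bool" where
  "bracket_width_le L m \<longleftrightarrow>
     (\<forall>a \<in> derived L. \<exists>B C. (\<forall>i<m. B i \<in> L \<and> C i \<in> L) \<and>
        a = foldr (\<lambda>i acc. vf_add (vf_bracket (B i) (C i)) acc) [0..<m] vf_zero)"

end

theory Submission
  imports Defs "HOL-Library.Poly_Mapping"
begin

type_synonym 'a lr = "int \<Rightarrow>\<^sub>0 'a poly"

abbreviation lkp where "lkp \<equiv> Poly_Mapping.lookup"
abbreviation kys where "kys \<equiv> Poly_Mapping.keys"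
abbreviation sng where "sng \<equiv> Poly_Mapping.single"

lemma update_eq_add: "a \<notin> kys f \<Longrightarrow> Poly_Mapping.update a b f = f + sng a b"
proof (rule poly_mapping_eqI)
  fix k assume "a \<notin> kys f"
  then have "lkp f a = 0" by (simp add: in_keys_iff)
  then show "lkp (Poly_Mapping.update a b f) k = lkp (f + sng a b) k"
    by (auto simp: lookup_update lookup_add lookup_single when_def)
qed

lemma lr_induct[case_names zero add]:
  assumes "P 0" and "\<And>f a b. P f \<Longrightarrow> P (f + sng a b)"
  shows "P (f :: ('c \<Rightarrow>\<^sub>0 'b::monoid_add))"
  by (induct f rule: update_induct) (use assms in \<open>auto simp: update_eq_add\<close>)

lemma add_zero_of_additive:
  assumes "\<And>f g. D (f + (g::'c::monoid_add)) = D f + (D g :: 'b::ab_group_add)" shows "D 0 = 0"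
proof -
  have "D 0 + D 0 = D 0 + 0" using assms[of 0 0] by simp
  then show ?thesis by (metis add_left_cancel)
qed

lemma deriv_from_singles:
  fixes D :: "('c::comm_monoid_add \<Rightarrow>\<^sub>0 'b::comm_ring) \<Rightarrow> ('c \<Rightarrow>\<^sub>0 'b)"
  assumes Dadd: "\<And>f g. D (f + g) = D f + D g"
    and sing: "\<And>a b c d. D (sng a b * sng c d) =
        D (sng a b) * sng c d + sng a b * D (sng c d)"
  shows "D (f * g) = D f * g + f * D g"
proof -
  have D0: "D 0 = 0" using add_zero_of_additive Dadd by blast
  have single_g: "D (sng a b * g) = D (sng a b) * g + sng a b * D g" for a b g
  proof (induct g rule: lr_induct)
    case zero then show ?case by (simp add: D0)
  next
    case (add g c d)
    then show ?case by (simp only: distrib_left Dadd sing) (simp add: algebra_simps)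
  qed
  show ?thesis
  proof (induct f rule: lr_induct)
    case zero then show ?case by (simp add: D0)
  next
    case (add f a b)
    then show ?case by (simp only: distrib_right Dadd single_g) (simp add: algebra_simps)
  qed
qed

definition Ee :: "'a::field_char_0 lr \<Rightarrow> 'a lr" where
  "Ee f = Abs_poly_mapping (\<lambda>n. of_int n * lkp f n)"

definition Dz :: "'a::field_char_0 lr \<Rightarrow> 'a lr" where
  "Dz f = Abs_poly_mapping (\<lambda>n. pderiv (lkp f n))"

lemma lookup_Ee: "lkp (Ee f) n = of_int n * lkp f n"
proof -
  have "finite {n. of_int n * lkp f n \<noteq> 0}"
    by (rule finite_subset[OF _ finite_keys[of f]]) (auto simp: in_keys_iff)
  then show ?thesis unfolding Ee_def by simp
qed

lemma lookup_Dz: "lkp (Dz f) n = pderiv (lkp f n)"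
proof -
  have "finite {n. pderiv (lkp f n) \<noteq> 0}"
    by (rule finite_subset[OF _ finite_keys[of f]]) (auto simp: in_keys_iff)
  then show ?thesis unfolding Dz_def by simp
qed

lemma Ee_add: "Ee (f + g) = Ee f + Ee g"
  by (rule poly_mapping_eqI) (simp add: lookup_Ee lookup_add algebra_simps)
lemma Dz_add: "Dz (f + g) = Dz f + Dz g"
  by (rule poly_mapping_eqI) (simp add: lookup_Dz lookup_add pderiv_add)
lemma Ee_single: "Ee (sng a b) = sng a (of_int a * b)"
  by (rule poly_mapping_eqI) (simp add: lookup_Ee lookup_single when_def)
lemma Dz_single: "Dz (sng a b) = sng a (pderiv b)"
  by (rule poly_mapping_eqI) (simp add: lookup_Dz lookup_single when_def)
lemma Ee_0[simp]: "Ee 0 = 0" by (rule poly_mapping_eqI) (simp add: lookup_Ee)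
lemma Dz_0[simp]: "Dz 0 = 0" by (rule poly_mapping_eqI) (simp add: lookup_Dz)
lemma Ee_uminus: "Ee (- f) = - Ee f"
  by (rule poly_mapping_eqI) (simp add: lookup_Ee lookup_uminus)
lemma Dz_uminus: "Dz (- f) = - Dz f"
  by (rule poly_mapping_eqI) (simp add: lookup_Dz lookup_uminus pderiv_minus)
lemma Ee_diff: "Ee (f - g) = Ee f - Ee g"
  by (rule poly_mapping_eqI) (simp add: lookup_Ee lookup_minus algebra_simps)
lemma Dz_diff: "Dz (f - g) = Dz f - Dz g"
  by (rule poly_mapping_eqI) (simp add: lookup_Dz lookup_minus pderiv_diff)

lemma Ee_mult: "Ee (f * g) = Ee f * g + f * Ee g"
  by (rule deriv_from_singles) (simp_all add: Ee_add Ee_single mult_single algebra_simps single_add[symmetric])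

lemma Dz_mult: "Dz (f * g) = Dz f * g + f * Dz g"
  by (rule deriv_from_singles) (simp_all add: Dz_add Dz_single mult_single pderiv_mult single_add[symmetric] algebra_simps)

lemma Ee_Dz: "Ee (Dz f) = Dz (Ee f)"
  by (rule poly_mapping_eqI) (simp add: lookup_Ee lookup_Dz pderiv_smult of_int_poly)

lemma sng_eq_iff[simp]: "sng k a = sng k b \<longleftrightarrow> a = b"
  by (metis lookup_single_eq)
lemma sng_eq_0_iff[simp]: "sng k a = 0 \<longleftrightarrow> a = 0"
  by (metis lookup_single_eq lookup_zero single_zero)

definition pb :: "'a::field_char_0 lr \<Rightarrow> 'a lr \<Rightarrow> 'a lr" where
  "pb f g = Dz f * Ee g - Ee f * Dz g"

lemma pb_add1: "pb (f + g) h = pb f h + pb g h"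
  by (simp add: pb_def Dz_add Ee_add algebra_simps)
lemma pb_add2: "pb h (f + g) = pb h f + pb h g"
  by (simp add: pb_def Dz_add Ee_add algebra_simps)
lemma pb_diff1: "pb (f - g) h = pb f h - pb g h"
  by (simp add: pb_def Dz_diff Ee_diff algebra_simps)
lemma pb_diff2: "pb h (f - g) = pb h f - pb h g"
  by (simp add: pb_def Dz_diff Ee_diff algebra_simps)
lemma pb_uminus1: "pb (- f) h = - pb f h"
  by (simp add: pb_def Dz_uminus Ee_uminus algebra_simps)
lemma pb_uminus2: "pb h (- f) = - pb h f"
  by (simp add: pb_def Dz_uminus Ee_uminus algebra_simps)
lemma pb_0[simp]: "pb 0 f = 0" "pb f 0 = 0"
  by (simp_all add: pb_def)
lemma pb_antisym: "pb f g = - pb g f"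
  by (simp add: pb_def algebra_simps)
lemma pb_mult2: "pb f (g * h) = pb f g * h + g * pb f h"
  by (simp add: pb_def Dz_mult Ee_mult algebra_simps)
lemma pb_mult1: "pb (g * h) f = pb g f * h + g * pb h f"
  by (simp add: pb_def Dz_mult Ee_mult algebra_simps)

lemma pb_jacobi: "pb f (pb g h) = pb (pb f g) h + pb g (pb f h)"
proof -
  have c1: "Ee (Dz u) = Dz (Ee u)" for u :: "'a lr" by (rule Ee_Dz)
  show ?thesis
    unfolding pb_def
    by (simp add: Dz_mult Ee_mult Dz_diff Ee_diff c1 algebra_simps)
qed

definition Pz :: "'a::field_char_0 poly \<Rightarrow> 'a lr" where "Pz q = sng 0 q"

lemma Pz_add: "Pz (q + r) = Pz q + Pz r" by (simp add: Pz_def single_add)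
lemma Pz_diff: "Pz (q - r) = Pz q - Pz r" by (simp add: Pz_def single_diff)
lemma Pz_uminus: "Pz (- q) = - Pz q" by (simp add: Pz_def single_uminus)
lemma Pz_mult: "Pz (q * r) = Pz q * Pz r" by (simp add: Pz_def mult_single)
lemma Pz_0[simp]: "Pz 0 = 0" by (simp add: Pz_def)
lemma Pz_1[simp]: "Pz 1 = 1" by (simp add: Pz_def)
lemma Pz_1'[simp]: "Pz [:1:] = 1" by (simp add: Pz_def one_pCons[symmetric])
lemma Pz_power: "Pz (q ^ n) = Pz q ^ n" by (induct n) (simp_all add: Pz_mult)
lemma Ee_Pz[simp]: "Ee (Pz q) = 0" by (simp add: Pz_def Ee_single)
lemma Dz_Pz: "Dz (Pz q) = Pz (pderiv q)" by (simp add: Pz_def Dz_single)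
lemma Pz_inj: "Pz q = Pz r \<longleftrightarrow> q = r" by (simp add: Pz_def)
lemma Pz_mult_single: "Pz q * sng a b = sng a (q * b)" by (simp add: Pz_def mult_single)

definition Tt :: "'a::field_char_0 lr" where "Tt = sng 1 1"
definition Ti :: "'a::field_char_0 lr" where "Ti = sng (-1) 1"
definition Zv :: "'a::field_char_0 lr" where "Zv = Pz [:0,1:]"

lemma Tt_Ti: "Tt * Ti = 1" by (simp add: Tt_def Ti_def mult_single)
lemma Ee_Tt[simp]: "Ee Tt = Tt" by (simp add: Tt_def Ee_single)
lemma Dz_Tt[simp]: "Dz Tt = 0" by (simp add: Tt_def Dz_single)
lemma Ee_Ti[simp]: "Ee Ti = - Ti" by (simp add: Ti_def Ee_single single_uminus)
lemma Dz_Ti[simp]: "Dz Ti = 0" by (simp add: Ti_def Dz_single)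
lemma Ee_Zv[simp]: "Ee Zv = 0" by (simp add: Zv_def)
lemma Dz_Zv[simp]: "Dz Zv = 1" by (simp add: Zv_def Dz_Pz pderiv_pCons)
lemma Tt_power: "Tt ^ n = sng (int n) 1"
  by (induct n) (simp_all add: Tt_def mult_single single_one algebra_simps)
lemma Tt_nz: "Tt \<noteq> 0" by (simp add: Tt_def)

lemma Tt_mult_single: "Tt * sng a b = sng (a + 1) b" by (simp add: Tt_def mult_single add.commute)
lemma Ti_mult_single: "Ti * sng a b = sng (a - 1) b" by (simp add: Ti_def mult_single)

lemma lr_induct'[case_names zero add]:
  assumes "P 0" and "\<And>f a b. a \<notin> kys f \<Longrightarrow> b \<noteq> 0 \<Longrightarrow> P f \<Longrightarrow> P (f + sng a b)"
  shows "P (f :: ('c \<Rightarrow>\<^sub>0 'b::monoid_add))"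
  by (induct f rule: update_induct) (use assms in \<open>auto simp: update_eq_add\<close>)

locale dp =
  fixes p :: "'a::field_char_0 poly"
  assumes deg2: "degree p = 2" and sqf: "rsquarefree p"
begin

definition "ca = coeff p 2"
definition "c1 = coeff p 1"
definition "c0 = coeff p 0"
definition "disc = c1 * c1 - 4 * ca * c0"

lemma ca_nz: "ca \<noteq> 0"
proof -
  have "p \<noteq> 0" using deg2 by auto
  then show ?thesis using deg2 unfolding ca_def by (metis leading_coeff_0_iff)
qed

lemma p_expl: "p = [:c0, c1, ca:]"
proof (rule poly_eqI)
  fix n show "coeff p n = coeff [:c0, c1, ca:] n"
  proof (cases "n \<le> 2")
    case True then have "n = 0 \<or> n = 1 \<or> n = 2" by auto
    then show ?thesis by (auto simp: c0_def c1_def ca_def numeral_2_eq_2)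
  next
    case False
    then have "coeff p n = 0" using deg2 by (intro coeff_eq_0) auto
    moreover have "coeff [:c0, c1, ca:] n = 0" using False
      by (cases n; cases "n - 1"; cases "n - 2") (auto simp: coeff_pCons split: nat.splits)
    ultimately show ?thesis by simp
  qed
qed

lemma pderiv_p: "pderiv p = [:c1, 2 * ca:]"
  by (subst p_expl) (simp add: pderiv_pCons)

lemma disc_identity: "pderiv p * pderiv p - smult (4 * ca) p = [:disc:]"
  by (simp add: pderiv_p p_expl[symmetric], subst p_expl) (simp add: disc_def algebra_simps)

lemma disc_nz: "disc \<noteq> 0"
proof
  assume d0: "disc = 0"
  define r where "r = - c1 / (2 * ca)"
  have ca: "ca \<noteq> 0" by (rule ca_nz)
  have c0e: "c0 = c1 * c1 / (4 * ca)" using d0 ca by (simp add: disc_def field_simps)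
  have "[:-r,1:]^2 = [:r*r, -2*r, 1:]" by (simp add: power2_eq_square)
  then have "smult ca ([:-r,1:]^2) = [:ca*(r*r), ca*(-2*r), ca:]" by simp
  also have "\<dots> = [:c0, c1, ca:]" using ca by (simp add: r_def c0e field_simps)
  finally have "p = smult ca ([:-r,1:]^2)" by (simp add: p_expl[symmetric])
  moreover have "order r (smult ca ([:-r,1:]^2)) = 2" using ca by (simp add: order_smult order_power_n_n)
  ultimately have "order r p = 2" by simp
  then show False using sqf unfolding rsquarefree_def by (metis numeral_eq_one_iff semiring_norm(85) zero_neq_numeral)
qed

definition Yv :: "'a lr" where "Yv = sng (-1) p"

lemma Tt_Yv: "Tt * Yv = Pz p" by (simp add: Tt_def Yv_def mult_single Pz_def)
lemma Ee_Yv[simp]: "Ee Yv = - Yv" by (simp add: Yv_def Ee_single single_uminus)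
lemma Dz_Yv: "Dz Yv = sng (-1) (pderiv p)" by (simp add: Yv_def Dz_single)
lemma Tt_DzYv: "Tt * Dz Yv = Pz (pderiv p)" by (simp add: Tt_def Dz_Yv mult_single Pz_def)
lemma Yv_power: "Yv ^ n = sng (- int n) (p ^ n)"
  by (induct n) (simp_all add: Yv_def mult_single algebra_simps)

definition S :: "'a lr set" where "S = {f. \<forall>n. p ^ nat (- n) dvd lkp f n}"

lemma S_single: "sng a b \<in> S \<longleftrightarrow> p ^ nat (- a) dvd b"
  by (auto simp: S_def lookup_single when_def)

lemma S_0[simp]: "0 \<in> S" by (simp add: S_def)
lemma S_add: "f \<in> S \<Longrightarrow> g \<in> S \<Longrightarrow> f + g \<in> S" by (simp add: S_def lookup_add)
lemma S_uminus: "f \<in> S \<Longrightarrow> - f \<in> S" by (simp add: S_def lookup_uminus)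
lemma S_diff: "f \<in> S \<Longrightarrow> g \<in> S \<Longrightarrow> f - g \<in> S" by (simp add: S_def lookup_minus)
lemma S_Pz: "Pz q \<in> S" by (simp add: Pz_def S_single)
lemma S_1[simp]: "1 \<in> S" using S_Pz[of 1] by simp
lemma S_Tt: "Tt \<in> S" by (simp add: Tt_def S_single)
lemma S_Yv: "Yv \<in> S" by (simp add: Yv_def S_single)
lemma S_Zv: "Zv \<in> S" by (simp add: Zv_def S_Pz)
lemma S_Ee: "f \<in> S \<Longrightarrow> Ee f \<in> S" by (simp add: S_def lookup_Ee)

lemma S_induct[consumes 1, case_names zero add]:
  assumes "f \<in> S" and "P 0"
    and "\<And>f a b. f \<in> S \<Longrightarrow> sng a b \<in> S \<Longrightarrow> P f \<Longrightarrow> P (f + sng a b)"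
  shows "P f"
  using assms(1)
proof (induct f rule: lr_induct')
  case zero then show ?case using assms(2) by simp
next
  case (add f a b)
  have la: "lkp f a = 0" using add(1) by (simp add: in_keys_iff)
  have "\<forall>n. p ^ nat (- n) dvd lkp f n"
  proof
    fix n show "p ^ nat (- n) dvd lkp f n"
    proof (cases "n = a")
      case True then show ?thesis using la by simp
    next
      case False
      then have "lkp f n = lkp (f + sng a b) n" by (simp add: lookup_add lookup_single when_def)
      then show ?thesis using add(4) by (simp add: S_def)
    qed
  qed
  then have "f \<in> S" by (simp add: S_def)
  moreover have "sng a b \<in> S"
  proof -
    have "lkp (f + sng a b) a = b" using la by (simp add: lookup_add)
    moreover have "p ^ nat (- a) dvd lkp (f + sng a b) a" using add(4) unfolding S_def by blast
    ultimately show ?thesis by (simp add: S_single)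
  qed
  ultimately show ?case using add assms(3) by blast
qed

lemma S_mult_single: "sng a b \<in> S \<Longrightarrow> sng c d \<in> S \<Longrightarrow> sng a b * sng c d \<in> S"
proof -
  assume "sng a b \<in> S" "sng c d \<in> S"
  then have 1: "p ^ nat (- a) dvd b" "p ^ nat (- c) dvd d" by (simp_all add: S_single)
  then have "p ^ nat (- a) * p ^ nat (- c) dvd b * d" by (rule mult_dvd_mono)
  then have "p ^ (nat (- a) + nat (- c)) dvd b * d" by (simp add: power_add)
  moreover have "nat (- (a + c)) \<le> nat (- a) + nat (- c)" by simp
  ultimately have "p ^ nat (- (a + c)) dvd b * d" using le_imp_power_dvd dvd_trans by blast
  then show ?thesis by (simp add: mult_single S_single)
qed

lemma S_mult: "f \<in> S \<Longrightarrow> g \<in> S \<Longrightarrow> f * g \<in> S"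
proof (induct f rule: S_induct)
  case zero then show ?case by simp
next
  case (add f a b)
  have "sng a b * g \<in> S" using \<open>g \<in> S\<close>
  proof (induct g rule: S_induct)
    case zero then show ?case by simp
  next
    case (add g c d)
    then show ?case using \<open>sng a b \<in> S\<close> by (simp add: distrib_left S_add S_mult_single)
  qed
  then show ?case using add by (simp add: distrib_right S_add)
qed

lemma S_power: "f \<in> S \<Longrightarrow> f ^ n \<in> S" by (induct n) (simp_all add: S_mult)

lemma Pz_pCons: "Pz (pCons c q) = Pz [:c:] + Zv * Pz q"
proof -
  have "pCons c q = [:c:] + [:0,1:] * q" by (simp add: pCons_eq_iff)
  have "Pz (pCons c q) = Pz ([:c:] + [:0,1:] * q)" by (subst \<open>pCons c q = _\<close>) (rule refl)
  also have "Pz ([:c:] + [:0,1:] * q) = Pz [:c:] + Zv * Pz q" by (simp only: Pz_add Pz_mult Zv_def)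
  finally show ?thesis .
qed

lemma S_gen_induct[consumes 1, case_names Tt Yv Zv const add mult]:
  assumes "f \<in> S" and "P Tt" and "P Yv" and "P Zv" and "\<And>c. P (Pz [:c:])"
    and "\<And>f g. f \<in> S \<Longrightarrow> g \<in> S \<Longrightarrow> P f \<Longrightarrow> P g \<Longrightarrow> P (f + g)"
    and "\<And>f g. f \<in> S \<Longrightarrow> g \<in> S \<Longrightarrow> P f \<Longrightarrow> P g \<Longrightarrow> P (f * g)"
  shows "P f"
proof -
  have P0: "P 0" using assms(5)[of 0] by simp
  have Ppow: "f \<in> S \<Longrightarrow> P f \<Longrightarrow> P (f ^ n)" for f n
  proof (induct n)
    case 0 then show ?case using assms(5)[of 1] by simp
  next
    case (Suc n)
    then have "P (f ^ n)" by blast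
    then have "P (f * f ^ n)" using assms(7)[OF Suc.prems(1) S_power[OF Suc.prems(1)] Suc.prems(2)] by blast
    then show ?case by simp
  qed
  have PPz: "P (Pz q)" for q
  proof (induct q)
    case 0 then show ?case using P0 by simp
  next
    case (pCons c q)
    have "P (Pz [:c:] + Zv * Pz q)"
      using assms(6)[OF S_Pz S_mult[OF S_Zv S_Pz] assms(5) assms(7)[OF S_Zv S_Pz assms(4) pCons(2)]] .
    then show ?case by (simp only: Pz_pCons[of c q])
  qed
  show ?thesis using assms(1)
  proof (induct f rule: S_induct)
    case zero then show ?case by (rule P0)
  next
    case (add f a b)
    have "P (sng a b)"
    proof (cases "a \<ge> 0")
      case True
      then have "sng a b = Tt ^ nat a * Pz b" by (simp add: Tt_power Pz_def mult_single)
      moreover have "P (Tt ^ nat a * Pz b)" by (rule assms(7)[OF S_power[OF S_Tt] S_Pz Ppow[OF S_Tt assms(2)] PPz])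
      ultimately show ?thesis by simp
    next
      case False
      obtain b0 where b0: "b = p ^ nat (- a) * b0" using add(2) by (auto simp: S_single)
      have "sng a b = Yv ^ nat (- a) * Pz b0" using False by (simp add: Yv_power Pz_def mult_single b0)
      moreover have "P (Yv ^ nat (- a) * Pz b0)" by (rule assms(7)[OF S_power[OF S_Yv] S_Pz Ppow[OF S_Yv assms(3)] PPz])
      ultimately show ?thesis by simp
    qed
    then show ?case using assms(6)[OF add(1) add(2) add(3)] by blast
  qed
qed

lemma S_bezout:
  assumes "u * Tt \<in> S" "u * Yv \<in> S" "u * Pz (pderiv p) \<in> S"
  shows "u \<in> S"
proof -
  have "Pz (pderiv p) * Pz (pderiv p) - Pz [:4 * ca:] * (Tt * Yv) = Pz [:disc:]"
  proof -
    have "Pz (pderiv p) * Pz (pderiv p) - Pz [:4 * ca:] * (Tt * Yv) = Pz (pderiv p * pderiv p - smult (4*ca) p)"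
      by (simp add: Tt_Yv Pz_diff flip: Pz_mult)
    then show ?thesis using disc_identity by simp
  qed
  then have "Pz [:1/disc:] * (Pz (pderiv p) * Pz (pderiv p) - Pz [:4 * ca:] * (Tt * Yv)) = 1"
    using disc_nz by (simp add: Pz_mult[symmetric])
  then have "u = u * (Pz [:1/disc:] * (Pz (pderiv p) * Pz (pderiv p) - Pz [:4 * ca:] * (Tt * Yv)))"
    by simp
  also have "\<dots> = Pz [:1/disc:] * (Pz (pderiv p) * (u * Pz (pderiv p)) - Pz [:4 * ca:] * Yv * (u * Tt))"
    by (simp add: algebra_simps)
  also have "\<dots> \<in> S"
    by (rule S_mult[OF S_Pz S_diff[OF S_mult[OF S_Pz assms(3)] S_mult[OF S_mult[OF S_Pz S_Yv] assms(1)]]])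
  finally show ?thesis .
qed

end

lemma bilin_singles:
  fixes B1 B2 :: "('c::comm_monoid_add \<Rightarrow>\<^sub>0 'b::comm_ring) \<Rightarrow> ('c \<Rightarrow>\<^sub>0 'b) \<Rightarrow> 'd::ab_group_add"
  assumes a11: "\<And>f1 f2 g. B1 (f1 + f2) g = B1 f1 g + B1 f2 g"
    and a12: "\<And>f g1 g2. B1 f (g1 + g2) = B1 f g1 + B1 f g2"
    and a21: "\<And>f1 f2 g. B2 (f1 + f2) g = B2 f1 g + B2 f2 g"
    and a22: "\<And>f g1 g2. B2 f (g1 + g2) = B2 f g1 + B2 f g2"
    and sing: "\<And>a b c d. B1 (sng a b) (sng c d) = B2 (sng a b) (sng c d)"
  shows "B1 f g = B2 f g"
proof -
  have z1: "B1 0 g = 0" for g using a11[of 0 0 g] by simp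
  have z2: "B2 0 g = 0" for g using a21[of 0 0 g] by simp
  have z1': "B1 f 0 = 0" for f using a12[of f 0 0] by simp
  have z2': "B2 f 0 = 0" for f using a22[of f 0 0] by simp
  have s: "B1 (sng a b) g = B2 (sng a b) g" for a b g
    by (induct g rule: lr_induct) (simp_all add: z1' z2' a12 a22 sing)
  show ?thesis
    by (induct f rule: lr_induct) (simp_all add: z1 z2 a11 a21 s)
qed

definition lev :: "'a::field_char_0 lr \<Rightarrow> 'a \<Rightarrow> 'a \<Rightarrow> 'a" where
  "lev f t z = (\<Sum>n\<in>kys f. t powi n * poly (lkp f n) z)"

lemma lev_superset:
  assumes "finite A" "kys f \<subseteq> A"
  shows "lev f t z = (\<Sum>n\<in>A. t powi n * poly (lkp f n) z)"
  unfolding lev_def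
  by (rule sum.mono_neutral_left) (use assms in \<open>auto simp: in_keys_iff\<close>)

lemma lev_add: "lev (f + g) t z = lev f t z + lev g t z"
proof -
  let ?A = "kys f \<union> kys g"
  have "kys (f + g) \<subseteq> ?A" by (rule keys_add)
  then show ?thesis
    by (simp add: lev_superset[of ?A] lookup_add distrib_left distrib_right sum.distrib)
qed

lemma lev_single: "lev (sng a b) t z = t powi a * poly b z"
  by (simp add: lev_def)

lemma lev_0[simp]: "lev 0 t z = 0" by (simp add: lev_def)

lemma lev_uminus: "lev (- f) t z = - lev f t z"
  using lev_add[of f "- f" t z] by (simp add: add_eq_0_iff)

lemma lev_diff: "lev (f - g) t z = lev f t z - lev g t z"
  using lev_add[of "f - g" g t z] by simp

lemma lev_mult: "t \<noteq> 0 \<Longrightarrow> lev (f * g) t z = lev f t z * lev g t z"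
  by (rule bilin_singles[of "\<lambda>f g. lev (f * g) t z" "\<lambda>f g. lev f t z * lev g t z", simplified])
     (simp_all add: lev_add distrib_left distrib_right mult_single lev_single power_int_add)

lemma lev_Pz: "lev (Pz q) t z = poly q z" by (simp add: Pz_def lev_single)

lemma lev_identity:
  assumes "\<And>t z. t \<noteq> 0 \<Longrightarrow> lev f t z = 0"
  shows "f = 0"
proof -
  define K where "K = kys f"
  have finK: "finite K" by (simp add: K_def)
  define N :: int where "N = (if K = {} then 0 else - Min K)"
  have Nge: "n + N \<ge> 0" if "n \<in> K" for n
  proof -
    have "Min K \<le> n" using finK that by simp
    then show ?thesis using that by (auto simp: N_def)
  qed
  have inj: "inj_on (\<lambda>n. nat (n + N)) K"
  proof (rule inj_onI)
    fix m n assume mn: "m \<in> K" "n \<in> K" "nat (m + N) = nat (n + N)"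
    then have "int (nat (m + N)) = int (nat (n + N))" by simp
    then have "m + N = n + N" using Nge[OF mn(1)] Nge[OF mn(2)] by simp
    then show "m = n" by simp
  qed
  have coeffs0: "poly (lkp f n) z = 0" if nK: "n \<in> K" for n z
  proof -
    define Q where "Q = (\<Sum>m\<in>K. monom (poly (lkp f m) z) (nat (m + N)))"
    have "poly Q t = 0" if t: "t \<noteq> 0" for t
    proof -
      have "poly Q t = (\<Sum>m\<in>K. poly (lkp f m) z * t ^ nat (m + N))"
        by (simp add: Q_def poly_sum poly_monom)
      also have "\<dots> = (\<Sum>m\<in>K. t powi N * (t powi m * poly (lkp f m) z))"
      proof (rule sum.cong[OF refl])
        fix m assume "m \<in> K"
        then have "t ^ nat (m + N) = t powi (m + N)" using Nge by (metis power_int_of_nat int_nat_eq)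
        also have "\<dots> = t powi N * t powi m" using t by (simp add: power_int_add)
        finally show "poly (lkp f m) z * t ^ nat (m + N) = t powi N * (t powi m * poly (lkp f m) z)"
          by simp
      qed
      also have "\<dots> = t powi N * lev f t z" by (simp add: lev_def K_def sum_distrib_left)
      also have "\<dots> = 0" using assms t by simp
      finally show ?thesis .
    qed
    then have "{t. t \<noteq> 0} \<subseteq> {t. poly Q t = 0}" by auto
    moreover have "infinite {t::'a. t \<noteq> 0}"
    proof -
      have "UNIV = insert 0 {t::'a. t \<noteq> 0}" by auto
      then show ?thesis using infinite_UNIV_char_0 by (metis finite_insert)
    qed
    ultimately have "infinite {t. poly Q t = 0}" using finite_subset by blast
    then have "Q = 0" using poly_roots_finite by blast
    then have "coeff Q (nat (n + N)) = 0" by simp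
    moreover have "coeff Q (nat (n + N)) = poly (lkp f n) z"
    proof -
      have "coeff Q (nat (n + N)) = (\<Sum>m\<in>K. if nat (m + N) = nat (n + N) then poly (lkp f m) z else 0)"
        by (simp add: Q_def coeff_sum coeff_monom)
      also have "\<dots> = (\<Sum>m\<in>K. if m = n then poly (lkp f m) z else 0)"
        by (rule sum.cong[OF refl]) (use inj nK in \<open>auto dest: inj_onD\<close>)
      also have "\<dots> = poly (lkp f n) z" using nK finK by simp
      finally show ?thesis .
    qed
    ultimately show ?thesis by simp
  qed
  show ?thesis
  proof (rule poly_mapping_eqI)
    fix n
    show "lkp f n = lkp 0 n"
    proof (cases "n \<in> K")
      case True
      then have "\<forall>z. poly (lkp f n) z = 0" using coeffs0 by blast
      then show ?thesis by (simp add: poly_all_0_iff_0)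
    next
      case False then show ?thesis by (simp add: K_def in_keys_iff)
    qed
  qed
qed

lemma pf_polyz: "(\<lambda>(x, y, z). poly q z) \<in> poly_fun3"
proof (induct q)
  case 0 then show ?case using pf_const[of 0] by simp
next
  case (pCons c q)
  have "(\<lambda>v. (\<lambda>_. c) v + (\<lambda>v. (\<lambda>(x, y, z). z) v * (\<lambda>(x, y, z). poly q z) v) v) \<in> poly_fun3"
    by (intro pf_add pf_mult pf_const pf_z pCons(2))
  then show ?case by (simp add: case_prod_beta)
qed

lemma pf_curve:
  assumes "F \<in> poly_fun3"
  shows "\<exists>Q. \<forall>s. F (poly A s, poly B s, poly C s) = poly Q s"
  using assms
proof (induct rule: poly_fun3.induct)
  case (pf_const c) show ?case by (rule exI[of _ "[:c:]"]) simp
next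
  case pf_x then show ?case by auto
next
  case pf_y then show ?case by auto
next
  case pf_z then show ?case by auto
next
  case (pf_add f g)
  then obtain Q1 Q2 where "\<forall>s. f (poly A s, poly B s, poly C s) = poly Q1 s" "\<forall>s. g (poly A s, poly B s, poly C s) = poly Q2 s" by blast
  then show ?case by (metis poly_add)
next
  case (pf_mult f g)
  then obtain Q1 Q2 where "\<forall>s. f (poly A s, poly B s, poly C s) = poly Q1 s" "\<forall>s. g (poly A s, poly B s, poly C s) = poly Q2 s" by blast
  then show ?case by (metis poly_mult)
qed

lemma infinite_nonzero: "infinite {t::'a::field_char_0. t \<noteq> 0}"
proof -
  have "UNIV = insert 0 {t::'a. t \<noteq> 0}" by auto
  then show ?thesis using infinite_UNIV_char_0 by (metis finite_insert)
qed

lemma poly_zero_nonzero: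
  fixes Q :: "'a::field_char_0 poly"
  assumes "\<And>s. s \<noteq> 0 \<Longrightarrow> poly Q s = 0"
  shows "Q = 0"
proof -
  have "{t. t \<noteq> 0} \<subseteq> {t. poly Q t = 0}" using assms by auto
  then have "infinite {t. poly Q t = 0}" using finite_subset infinite_nonzero by blast
  then show "Q = 0" using poly_roots_finite by blast
qed

context dp begin

abbreviation Ocr where "Ocr \<equiv> coord_ring p"

definition restr :: "('a \<times> 'a \<times> 'a \<Rightarrow> 'a) \<Rightarrow> ('a \<times> 'a \<times> 'a \<Rightarrow> 'a)" where
  "restr F = (\<lambda>v. if v \<in> surf p then F v else 0)"

lemma Ocr_iff: "g \<in> Ocr \<longleftrightarrow> (\<exists>F \<in> poly_fun3. g = restr F)"
  by (auto simp: coord_ring_def restr_def)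

lemma surf_pt: "t \<noteq> 0 \<Longrightarrow> (t, poly p z / t, z) \<in> surf p"
  by (simp add: surf_def)

lemma poly_p_shift: "poly p (z0 + w) = poly p z0 + poly (pderiv p) z0 * w + ca * w * w"
  by (subst (1 2) p_expl) (simp add: pderiv_p algebra_simps)

lemma density:
  assumes g: "g \<in> Ocr" and z: "\<And>t z. t \<noteq> 0 \<Longrightarrow> g (t, poly p z / t, z) = 0"
  shows "g = (\<lambda>_. 0)"
proof
  fix v :: "'a \<times> 'a \<times> 'a"
  obtain F where F: "F \<in> poly_fun3" "g = restr F" using g Ocr_iff by blast
  obtain x0 y0 z0 where v: "v = (x0, y0, z0)" by (cases v) auto
  show "g v = 0"
  proof (cases "v \<in> surf p")
    case False then show ?thesis using F by (simp add: restr_def)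
  next
    case True
    then have xy: "x0 * y0 = poly p z0" by (simp add: v surf_def)
    show ?thesis
    proof (cases "x0 = 0")
      case False
      then have "y0 = poly p z0 / x0" using xy by (simp add: field_simps)
      then show ?thesis using z[OF False, of z0] v by simp
    next
      case x0: True
      then have pz0: "poly p z0 = 0" using xy by simp
      define d where "d = poly (pderiv p) z0"
      have "d * d = disc"
        using arg_cong[OF disc_identity, of "\<lambda>q. poly q z0"] pz0 by (simp add: d_def)
      then have dnz: "d \<noteq> 0" using disc_nz by auto
      define c where "c = y0 / d"
      obtain Q where Q: "\<forall>s. F (poly [:0,1:] s, poly [:c * d, ca * c * c:] s, poly [:z0, c:] s) = poly Q s"
        using pf_curve[OF F(1)] by blast
      have "poly Q s = 0" if s: "s \<noteq> 0" for s
      proof -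
        have pe: "poly p (z0 + c * s) = s * (c * d + ca * c * c * s)"
          using poly_p_shift[of z0 "c * s"] pz0 by (simp add: d_def algebra_simps)
        have e1: "(s, c * d + ca * c * c * s, z0 + c * s) = (s, poly p (z0 + c * s) / s, z0 + c * s)"
          using s pe by simp
        have e2: "(s, poly p (z0 + c * s) / s, z0 + c * s) \<in> surf p" by (rule surf_pt[OF s])
        have pt: "(poly [:0,1:] s, poly [:c * d, ca * c * c:] s, poly [:z0, c:] s) = (s, c * d + ca * c * c * s, z0 + c * s)"
          by (simp add: algebra_simps)
        have "poly Q s = F (s, c * d + ca * c * c * s, z0 + c * s)"
          using Q[rule_format, of s] unfolding pt by simp
        also have "\<dots> = F (s, poly p (z0 + c * s) / s, z0 + c * s)" using e1 by simp
        also have "\<dots> = g (s, poly p (z0 + c * s) / s, z0 + c * s)"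
          using F(2) e2 by (simp add: restr_def)
        also have "\<dots> = 0" by (rule z[OF s])
        finally show ?thesis .
      qed
      then have "Q = 0" by (rule poly_zero_nonzero)
      then have "F (0, c * d, z0) = 0" using Q[rule_format, of 0] by simp
      moreover have "c * d = y0" using dnz by (simp add: c_def)
      ultimately show ?thesis using F True by (simp add: restr_def v x0)
    qed
  qed
qed


lemma Ocr_restr: "F \<in> poly_fun3 \<Longrightarrow> restr F \<in> Ocr" using Ocr_iff by blast

lemma restr_add: "(\<lambda>v. restr F v + restr G v) = restr (\<lambda>v. F v + G v)" by (auto simp: restr_def)
lemma restr_mult: "(\<lambda>v. restr F v * restr G v) = restr (\<lambda>v. F v * G v)" by (auto simp: restr_def)
lemma restr_smult: "(\<lambda>v. c * restr F v) = restr (\<lambda>v. (\<lambda>_. c) v * F v)" by (auto simp: restr_def)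

lemma Ocr_add: "g1 \<in> Ocr \<Longrightarrow> g2 \<in> Ocr \<Longrightarrow> (\<lambda>v. g1 v + g2 v) \<in> Ocr"
  by (auto simp: Ocr_iff restr_add intro: pf_add)
lemma Ocr_mult: "g1 \<in> Ocr \<Longrightarrow> g2 \<in> Ocr \<Longrightarrow> (\<lambda>v. g1 v * g2 v) \<in> Ocr"
  by (auto simp: Ocr_iff restr_mult intro: pf_mult)
lemma Ocr_smult: "g \<in> Ocr \<Longrightarrow> (\<lambda>v. c * g v) \<in> Ocr"
proof -
  assume "g \<in> Ocr"
  then obtain F where F: "F \<in> poly_fun3" "g = restr F" by (auto simp: Ocr_iff)
  have "(\<lambda>v. (\<lambda>_. c) v * F v) \<in> poly_fun3" by (rule pf_mult[OF pf_const F(1)])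
  then show ?thesis using F restr_smult[of c F] Ocr_restr by metis
qed
lemma Ocr_zero: "(\<lambda>_. 0) \<in> Ocr"
proof -
  have "restr (\<lambda>_. 0) = (\<lambda>_. 0)" by (simp add: restr_def)
  then show ?thesis using Ocr_restr[OF pf_const[of 0]] by simp
qed
lemma Ocr_diff: "g1 \<in> Ocr \<Longrightarrow> g2 \<in> Ocr \<Longrightarrow> (\<lambda>v. g1 v - g2 v) \<in> Ocr"
  using Ocr_add[of g1 "\<lambda>v. (-1) * g2 v"] Ocr_smult[of g2 "-1"] by simp

definition corr :: "'a lr \<Rightarrow> ('a \<times> 'a \<times> 'a \<Rightarrow> 'a) \<Rightarrow> bool" where
  "corr h g \<longleftrightarrow> h \<in> S \<and> g \<in> Ocr \<and> (\<forall>t z. t \<noteq> 0 \<longrightarrow> g (t, poly p z / t, z) = lev h t z)"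

lemma lev_Tt: "lev Tt t z = t" by (simp add: Tt_def lev_single)
lemma lev_Yv: "lev Yv t z = poly p z / t" by (simp add: Yv_def lev_single power_int_minus_divide)
lemma lev_Zv: "lev Zv t z = z" by (simp add: Zv_def lev_Pz)

lemma O_side: "F \<in> poly_fun3 \<Longrightarrow> \<exists>h\<in>S. \<forall>t z. t \<noteq> 0 \<longrightarrow> F (t, poly p z / t, z) = lev h t z"
proof (induct rule: poly_fun3.induct)
  case (pf_const c) show ?case by (rule bexI[of _ "Pz [:c:]"]) (simp_all add: lev_Pz S_Pz)
next
  case pf_x show ?case by (rule bexI[of _ Tt]) (simp_all add: lev_Tt S_Tt)
next
  case pf_y show ?case by (rule bexI[of _ Yv]) (simp_all add: lev_Yv S_Yv)
next
  case pf_z show ?case by (rule bexI[of _ Zv]) (simp_all add: lev_Zv S_Zv)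
next
  case (pf_add f g)
  then obtain h1 h2 where "h1 \<in> S" "h2 \<in> S" "\<forall>t z. t \<noteq> 0 \<longrightarrow> f (t, poly p z / t, z) = lev h1 t z"
    "\<forall>t z. t \<noteq> 0 \<longrightarrow> g (t, poly p z / t, z) = lev h2 t z" by blast
  then show ?case by (intro bexI[of _ "h1 + h2"]) (simp_all add: lev_add S_add)
next
  case (pf_mult f g)
  then obtain h1 h2 where "h1 \<in> S" "h2 \<in> S" "\<forall>t z. t \<noteq> 0 \<longrightarrow> f (t, poly p z / t, z) = lev h1 t z"
    "\<forall>t z. t \<noteq> 0 \<longrightarrow> g (t, poly p z / t, z) = lev h2 t z" by blast
  then show ?case by (intro bexI[of _ "h1 * h2"]) (simp_all add: lev_mult S_mult)
qed

lemma S_side: "h \<in> S \<Longrightarrow> \<exists>F\<in>poly_fun3. \<forall>t z. t \<noteq> 0 \<longrightarrow> F (t, poly p z / t, z) = lev h t z"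
proof (induct h rule: S_gen_induct)
  case Tt show ?case by (rule bexI[OF _ pf_x]) (simp add: lev_Tt)
next
  case Yv show ?case by (rule bexI[OF _ pf_y]) (simp add: lev_Yv)
next
  case Zv show ?case by (rule bexI[OF _ pf_z]) (simp add: lev_Zv)
next
  case (const c) show ?case by (rule bexI[OF _ pf_const[of c]]) (simp add: lev_Pz)
next
  case (add f g)
  then obtain F G where "F \<in> poly_fun3" "G \<in> poly_fun3" "\<forall>t z. t \<noteq> 0 \<longrightarrow> F (t, poly p z / t, z) = lev f t z"
    "\<forall>t z. t \<noteq> 0 \<longrightarrow> G (t, poly p z / t, z) = lev g t z" by blast
  then show ?case by (intro bexI[of _ "\<lambda>v. F v + G v"] pf_add) (simp_all add: lev_add)
next
  case (mult f g)
  then obtain F G where "F \<in> poly_fun3" "G \<in> poly_fun3" "\<forall>t z. t \<noteq> 0 \<longrightarrow> F (t, poly p z / t, z) = lev f t z"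
    "\<forall>t z. t \<noteq> 0 \<longrightarrow> G (t, poly p z / t, z) = lev g t z" by blast
  then show ?case by (intro bexI[of _ "\<lambda>v. F v * G v"] pf_mult) (simp_all add: lev_mult)
qed

lemma corr_ex_O: "g \<in> Ocr \<Longrightarrow> \<exists>h. corr h g"
proof -
  assume "g \<in> Ocr"
  then obtain F where F: "F \<in> poly_fun3" "g = restr F" by (auto simp: Ocr_iff)
  then obtain h where "h \<in> S" "\<forall>t z. t \<noteq> 0 \<longrightarrow> F (t, poly p z / t, z) = lev h t z" using O_side by blast
  then show ?thesis using F \<open>g \<in> Ocr\<close> surf_pt by (auto simp: corr_def restr_def)
qed

lemma corr_ex_S: "h \<in> S \<Longrightarrow> \<exists>g. corr h g"
proof -
  assume "h \<in> S"
  then obtain F where F: "F \<in> poly_fun3" "\<forall>t z. t \<noteq> 0 \<longrightarrow> F (t, poly p z / t, z) = lev h t z" using S_side by blast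
  then show ?thesis using \<open>h \<in> S\<close> surf_pt Ocr_restr[OF F(1)] by (auto simp: corr_def restr_def intro!: exI[of _ "restr F"])
qed

lemma corr_unique_h: "corr h g \<Longrightarrow> corr h' g \<Longrightarrow> h = h'"
proof -
  assume a: "corr h g" "corr h' g"
  have "h - h' = 0"
    by (rule lev_identity) (use a in \<open>auto simp: corr_def lev_diff\<close>)
  then show ?thesis by simp
qed

lemma corr_unique_g: "corr h g \<Longrightarrow> corr h g' \<Longrightarrow> g = g'"
proof -
  assume a: "corr h g" "corr h g'"
  have "(\<lambda>v. g v - g' v) = (\<lambda>_. 0)"
    by (rule density) (use a in \<open>auto simp: corr_def intro: Ocr_diff\<close>)
  then show ?thesis by (metis (no_types) eq_iff_diff_eq_0 ext)
qed

definition Psi :: "'a lr \<Rightarrow> ('a \<times> 'a \<times> 'a \<Rightarrow> 'a)" where "Psi h = (THE g. corr h g)"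
definition Phi :: "('a \<times> 'a \<times> 'a \<Rightarrow> 'a) \<Rightarrow> 'a lr" where "Phi g = (THE h. corr h g)"

lemma Psi_eq: "corr h g \<Longrightarrow> Psi h = g"
  unfolding Psi_def by (rule the_equality) (auto intro: corr_unique_g)
lemma Phi_eq: "corr h g \<Longrightarrow> Phi g = h"
  unfolding Phi_def by (rule the_equality) (auto intro: corr_unique_h)
lemma corr_Psi: "h \<in> S \<Longrightarrow> corr h (Psi h)" using corr_ex_S Psi_eq by metis
lemma corr_Phi: "g \<in> Ocr \<Longrightarrow> corr (Phi g) g" using corr_ex_O Phi_eq by metis
lemma Psi_O: "h \<in> S \<Longrightarrow> Psi h \<in> Ocr" using corr_Psi corr_def by blast
lemma Phi_S: "g \<in> Ocr \<Longrightarrow> Phi g \<in> S" using corr_Phi corr_def by blast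
lemma Phi_Psi: "h \<in> S \<Longrightarrow> Phi (Psi h) = h" using corr_Psi Phi_eq by blast
lemma Psi_Phi: "g \<in> Ocr \<Longrightarrow> Psi (Phi g) = g" using corr_Phi Psi_eq by blast

lemma corr_add: "corr h1 g1 \<Longrightarrow> corr h2 g2 \<Longrightarrow> corr (h1 + h2) (\<lambda>v. g1 v + g2 v)"
  by (auto simp: corr_def S_add Ocr_add lev_add)
lemma corr_mult: "corr h1 g1 \<Longrightarrow> corr h2 g2 \<Longrightarrow> corr (h1 * h2) (\<lambda>v. g1 v * g2 v)"
  by (auto simp: corr_def S_mult Ocr_mult lev_mult)
lemma corr_smult: "corr h g \<Longrightarrow> corr (Pz [:c:] * h) (\<lambda>v. c * g v)"
  by (auto simp: corr_def S_mult S_Pz Ocr_smult lev_mult lev_Pz)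
lemma corr_zero: "corr 0 (\<lambda>_. 0)"
  by (auto simp: corr_def Ocr_zero)

lemma Psi_add: "h1 \<in> S \<Longrightarrow> h2 \<in> S \<Longrightarrow> Psi (h1 + h2) = (\<lambda>v. Psi h1 v + Psi h2 v)"
  by (intro Psi_eq corr_add corr_Psi)
lemma Psi_mult: "h1 \<in> S \<Longrightarrow> h2 \<in> S \<Longrightarrow> Psi (h1 * h2) = (\<lambda>v. Psi h1 v * Psi h2 v)"
  by (intro Psi_eq corr_mult corr_Psi)
lemma Psi_smult: "h \<in> S \<Longrightarrow> Psi (Pz [:c:] * h) = (\<lambda>v. c * Psi h v)"
  by (intro Psi_eq corr_smult corr_Psi)
lemma Psi_zero: "Psi 0 = (\<lambda>_. 0)"
  by (intro Psi_eq corr_zero)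
lemma Phi_add: "g1 \<in> Ocr \<Longrightarrow> g2 \<in> Ocr \<Longrightarrow> Phi (\<lambda>v. g1 v + g2 v) = Phi g1 + Phi g2"
  by (intro Phi_eq corr_add corr_Phi)
lemma Phi_mult: "g1 \<in> Ocr \<Longrightarrow> g2 \<in> Ocr \<Longrightarrow> Phi (\<lambda>v. g1 v * g2 v) = Phi g1 * Phi g2"
  by (intro Phi_eq corr_mult corr_Phi)
lemma Phi_smult: "g \<in> Ocr \<Longrightarrow> Phi (\<lambda>v. c * g v) = Pz [:c:] * Phi g"
  by (intro Phi_eq corr_smult corr_Phi)
lemma Phi_zero: "Phi (\<lambda>_. 0) = 0"
  by (intro Phi_eq corr_zero)

lemma Psi_inj: "h1 \<in> S \<Longrightarrow> h2 \<in> S \<Longrightarrow> Psi h1 = Psi h2 \<Longrightarrow> h1 = h2"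
  by (metis Phi_Psi)
lemma Phi_inj: "g1 \<in> Ocr \<Longrightarrow> g2 \<in> Ocr \<Longrightarrow> Phi g1 = Phi g2 \<Longrightarrow> g1 = g2"
  by (metis Psi_Phi)

end

context dp begin

lemma vf_O: "is_vfield p D \<Longrightarrow> g \<in> Ocr \<Longrightarrow> D g \<in> Ocr" by (simp add: is_vfield_def)
lemma vf_out: "is_vfield p D \<Longrightarrow> g \<notin> Ocr \<Longrightarrow> D g = (\<lambda>_. 0)" by (simp add: is_vfield_def)
lemma vf_add_rule: "is_vfield p D \<Longrightarrow> f \<in> Ocr \<Longrightarrow> g \<in> Ocr \<Longrightarrow> D (\<lambda>v. f v + g v) = (\<lambda>v. D f v + D g v)"
  by (simp add: is_vfield_def)
lemma vf_smult_rule: "is_vfield p D \<Longrightarrow> f \<in> Ocr \<Longrightarrow> D (\<lambda>v. c * f v) = (\<lambda>v. c * D f v)"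
  by (simp add: is_vfield_def)
lemma vf_mult_rule: "is_vfield p D \<Longrightarrow> f \<in> Ocr \<Longrightarrow> g \<in> Ocr \<Longrightarrow> D (\<lambda>v. f v * g v) = (\<lambda>v. f v * D g v + g v * D f v)"
  by (simp add: is_vfield_def)
lemma vf_zero_rule: "is_vfield p D \<Longrightarrow> D (\<lambda>_. 0) = (\<lambda>_. 0)"
  using vf_smult_rule[of D "\<lambda>_. 0" 0] Ocr_zero by simp

definition DL :: "'a vfield \<Rightarrow> 'a lr \<Rightarrow> 'a lr" where "DL D h = Phi (D (Psi h))"

lemma DL_S: "is_vfield p D \<Longrightarrow> h \<in> S \<Longrightarrow> DL D h \<in> S"
  by (simp add: DL_def Phi_S vf_O Psi_O)

lemma Psi_DL: "is_vfield p D \<Longrightarrow> h \<in> S \<Longrightarrow> Psi (DL D h) = D (Psi h)"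
  by (simp add: DL_def Psi_Phi vf_O Psi_O)

lemma DL_add: "is_vfield p D \<Longrightarrow> h1 \<in> S \<Longrightarrow> h2 \<in> S \<Longrightarrow> DL D (h1 + h2) = DL D h1 + DL D h2"
  by (simp add: DL_def Psi_add vf_add_rule Psi_O Phi_add vf_O)

lemma DL_mult: "is_vfield p D \<Longrightarrow> h1 \<in> S \<Longrightarrow> h2 \<in> S \<Longrightarrow> DL D (h1 * h2) = h1 * DL D h2 + h2 * DL D h1"
proof -
  assume a: "is_vfield p D" "h1 \<in> S" "h2 \<in> S"
  have e1: "D (\<lambda>v. Psi h1 v * Psi h2 v) = (\<lambda>v. Psi h1 v * D (Psi h2) v + Psi h2 v * D (Psi h1) v)"
    using a by (intro vf_mult_rule Psi_O)
  have "DL D (h1 * h2) = Phi (\<lambda>v. Psi h1 v * D (Psi h2) v + Psi h2 v * D (Psi h1) v)"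
    unfolding DL_def using a e1 by (simp only: Psi_mult)
  also have "\<dots> = Phi (\<lambda>v. Psi h1 v * D (Psi h2) v) + Phi (\<lambda>v. Psi h2 v * D (Psi h1) v)"
    using a by (intro Phi_add Ocr_mult Psi_O vf_O[OF a(1)] Psi_O)
  also have "\<dots> = h1 * DL D h2 + h2 * DL D h1"
    using a by (simp only: Phi_mult Psi_O vf_O Phi_Psi DL_def)
  finally show ?thesis .
qed

lemma DL_smult: "is_vfield p D \<Longrightarrow> h \<in> S \<Longrightarrow> DL D (Pz [:c:] * h) = Pz [:c:] * DL D h"
  by (simp add: DL_def Psi_smult vf_smult_rule Psi_O Phi_smult vf_O)

lemma DL_0: "is_vfield p D \<Longrightarrow> DL D 0 = 0"
  by (simp add: DL_def Psi_zero vf_zero_rule Phi_zero)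

lemma DL_1: "is_vfield p D \<Longrightarrow> DL D 1 = 0"
  using DL_mult[of D 1 1] by simp

lemma DL_const: "is_vfield p D \<Longrightarrow> DL D (Pz [:c:]) = 0"
  using DL_smult[of D 1 c] DL_1 by simp

lemma Pz_m1: "Pz [:-1:] * (h :: 'a lr) = - h"
proof -
  have "[:-1::'a:] = - 1" by (simp add: one_pCons)
  then have "Pz [:-1:] = - (1 :: 'a lr)" by (simp add: Pz_def single_uminus)
  then show ?thesis by simp
qed

lemma DL_uminus: "is_vfield p D \<Longrightarrow> h \<in> S \<Longrightarrow> DL D (- h) = - DL D h"
  using DL_smult[of D h "-1"] by (simp only: Pz_m1)

lemma DL_diff: "is_vfield p D \<Longrightarrow> h1 \<in> S \<Longrightarrow> h2 \<in> S \<Longrightarrow> DL D (h1 - h2) = DL D h1 - DL D h2"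
  using DL_add[of D h1 "- h2"] DL_uminus[of D h2] S_uminus by simp

lemma DL_iter: "is_vfield p D \<Longrightarrow> h \<in> S \<Longrightarrow> (D ^^ n) (Psi h) = Psi ((DL D ^^ n) h) \<and> (DL D ^^ n) h \<in> S"
  by (induct n) (simp_all add: Psi_DL DL_S)


lemma Psi_uminus: "h \<in> S \<Longrightarrow> Psi (- h) = (\<lambda>v. - Psi h v)"
  using Psi_smult[of h "-1"] by (simp only: Pz_m1) simp
lemma Psi_diff: "h1 \<in> S \<Longrightarrow> h2 \<in> S \<Longrightarrow> Psi (h1 - h2) = (\<lambda>v. Psi h1 v - Psi h2 v)"
  using Psi_add[of h1 "- h2"] Psi_uminus[of h2] S_uminus[of h2] by simp

definition sder :: "('a lr \<Rightarrow> 'a lr) \<Rightarrow> bool" where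
  "sder \<Delta> \<longleftrightarrow> (\<forall>f\<in>S. \<Delta> f \<in> S) \<and> (\<forall>f\<in>S. \<forall>g\<in>S. \<Delta> (f + g) = \<Delta> f + \<Delta> g)
     \<and> (\<forall>c. \<forall>f\<in>S. \<Delta> (Pz [:c:] * f) = Pz [:c:] * \<Delta> f)
     \<and> (\<forall>f\<in>S. \<forall>g\<in>S. \<Delta> (f * g) = f * \<Delta> g + g * \<Delta> f)"

lemma sder_S: "sder \<Delta> \<Longrightarrow> f \<in> S \<Longrightarrow> \<Delta> f \<in> S" by (simp add: sder_def)
lemma sder_add: "sder \<Delta> \<Longrightarrow> f \<in> S \<Longrightarrow> g \<in> S \<Longrightarrow> \<Delta> (f + g) = \<Delta> f + \<Delta> g" by (simp add: sder_def)
lemma sder_smult: "sder \<Delta> \<Longrightarrow> f \<in> S \<Longrightarrow> \<Delta> (Pz [:c:] * f) = Pz [:c:] * \<Delta> f" by (simp add: sder_def)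
lemma sder_mult: "sder \<Delta> \<Longrightarrow> f \<in> S \<Longrightarrow> g \<in> S \<Longrightarrow> \<Delta> (f * g) = f * \<Delta> g + g * \<Delta> f" by (simp add: sder_def)
lemma sder_0: "sder \<Delta> \<Longrightarrow> \<Delta> 0 = 0" using sder_add[of \<Delta> 0 0] by simp
lemma sder_1: "sder \<Delta> \<Longrightarrow> \<Delta> 1 = 0" using sder_mult[of \<Delta> 1 1] by simp
lemma sder_const: "sder \<Delta> \<Longrightarrow> \<Delta> (Pz [:c:]) = 0" using sder_smult[of \<Delta> 1 c] sder_1[of \<Delta>] by simp
lemma sder_uminus: "sder \<Delta> \<Longrightarrow> f \<in> S \<Longrightarrow> \<Delta> (- f) = - \<Delta> f"
  using sder_smult[of \<Delta> f "-1"] by (simp only: Pz_m1)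
lemma sder_diff: "sder \<Delta> \<Longrightarrow> f \<in> S \<Longrightarrow> g \<in> S \<Longrightarrow> \<Delta> (f - g) = \<Delta> f - \<Delta> g"
  using sder_add[of \<Delta> f "- g"] sder_uminus[of \<Delta> g] S_uminus[of g] by simp

lemma sder_DL: "is_vfield p D \<Longrightarrow> sder (DL D)"
  by (simp add: sder_def DL_S DL_add DL_smult DL_mult)

definition VF :: "('a lr \<Rightarrow> 'a lr) \<Rightarrow> 'a vfield" where
  "VF \<Delta> = (\<lambda>g v. if g \<in> Ocr then Psi (\<Delta> (Phi g)) v else 0)"

lemma VF_in: "g \<in> Ocr \<Longrightarrow> VF \<Delta> g = Psi (\<Delta> (Phi g))" by (simp add: VF_def)
lemma VF_out: "g \<notin> Ocr \<Longrightarrow> VF \<Delta> g = (\<lambda>_. 0)" by (simp add: VF_def)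

lemma VF_vfield: "sder \<Delta> \<Longrightarrow> is_vfield p (VF \<Delta>)"
proof -
  assume d: "sder \<Delta>"
  have S1: "\<forall>f \<in> Ocr. VF \<Delta> f \<in> Ocr" using d by (simp add: VF_in Psi_O sder_S Phi_S)
  have S2: "\<forall>f. f \<notin> Ocr \<longrightarrow> VF \<Delta> f = (\<lambda>_. 0)" by (simp add: VF_out)
  have S3: "\<forall>f \<in> Ocr. \<forall>g \<in> Ocr. VF \<Delta> (\<lambda>v. f v + g v) = (\<lambda>v. VF \<Delta> f v + VF \<Delta> g v)"
  proof (intro ballI)
    fix f g assume fg: "f \<in> Ocr" "g \<in> Ocr"
    have "VF \<Delta> (\<lambda>v. f v + g v) = Psi (\<Delta> (Phi f + Phi g))" using fg by (simp add: VF_in Ocr_add Phi_add)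
    also have "\<dots> = Psi (\<Delta> (Phi f) + \<Delta> (Phi g))" using fg d by (simp add: sder_add Phi_S)
    also have "\<dots> = (\<lambda>v. Psi (\<Delta> (Phi f)) v + Psi (\<Delta> (Phi g)) v)" using fg d by (simp add: Psi_add sder_S Phi_S)
    finally show "VF \<Delta> (\<lambda>v. f v + g v) = (\<lambda>v. VF \<Delta> f v + VF \<Delta> g v)" using fg by (simp add: VF_in)
  qed
  have S4: "\<forall>c. \<forall>f \<in> Ocr. VF \<Delta> (\<lambda>v. c * f v) = (\<lambda>v. c * VF \<Delta> f v)"
  proof (intro allI ballI)
    fix c f assume f: "f \<in> Ocr"
    have "VF \<Delta> (\<lambda>v. c * f v) = Psi (\<Delta> (Pz [:c:] * Phi f))" using f by (simp add: VF_in Ocr_smult Phi_smult)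
    also have "\<dots> = Psi (Pz [:c:] * \<Delta> (Phi f))" using f d by (simp add: sder_smult Phi_S)
    also have "\<dots> = (\<lambda>v. c * Psi (\<Delta> (Phi f)) v)" using f d by (simp add: Psi_smult sder_S Phi_S)
    finally show "VF \<Delta> (\<lambda>v. c * f v) = (\<lambda>v. c * VF \<Delta> f v)" using f by (simp add: VF_in)
  qed
  have S5: "\<forall>f \<in> Ocr. \<forall>g \<in> Ocr. VF \<Delta> (\<lambda>v. f v * g v) = (\<lambda>v. f v * VF \<Delta> g v + g v * VF \<Delta> f v)"
  proof (intro ballI)
    fix f g assume fg: "f \<in> Ocr" "g \<in> Ocr"
    have "VF \<Delta> (\<lambda>v. f v * g v) = Psi (\<Delta> (Phi f * Phi g))" using fg by (simp add: VF_in Ocr_mult Phi_mult)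
    also have "\<dots> = Psi (Phi f * \<Delta> (Phi g) + Phi g * \<Delta> (Phi f))" using fg d by (simp add: sder_mult Phi_S)
    also have "\<dots> = (\<lambda>v. Psi (Phi f) v * Psi (\<Delta> (Phi g)) v + Psi (Phi g) v * Psi (\<Delta> (Phi f)) v)"
      using fg d by (simp add: Psi_add Psi_mult sder_S Phi_S S_mult)
    also have "\<dots> = (\<lambda>v. f v * Psi (\<Delta> (Phi g)) v + g v * Psi (\<Delta> (Phi f)) v)"
      using fg by (simp add: Psi_Phi)
    finally show "VF \<Delta> (\<lambda>v. f v * g v) = (\<lambda>v. f v * VF \<Delta> g v + g v * VF \<Delta> f v)" using fg by (simp add: VF_in)
  qed
  show ?thesis unfolding is_vfield_def using S1 S2 S3 S4 S5 by blast
qed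

lemma DL_VF: "sder \<Delta> \<Longrightarrow> h \<in> S \<Longrightarrow> DL (VF \<Delta>) h = \<Delta> h"
  by (simp add: DL_def VF_in Psi_O Phi_Psi Phi_Psi sder_S)

lemma VF_DL: "is_vfield p D \<Longrightarrow> VF (DL D) = D"
proof (rule ext)
  fix g assume D: "is_vfield p D"
  show "VF (DL D) g = D g"
  proof (cases "g \<in> Ocr")
    case True then show ?thesis using D by (simp add: VF_in DL_def Psi_Phi vf_O)
  next
    case False then show ?thesis using D by (simp add: VF_out vf_out)
  qed
qed

lemma VF_cong: "(\<And>h. h \<in> S \<Longrightarrow> \<Delta>1 h = \<Delta>2 h) \<Longrightarrow> VF \<Delta>1 = VF \<Delta>2"
  by (intro ext) (auto simp: VF_def Phi_S)

lemma VF_add: "sder \<Delta>1 \<Longrightarrow> sder \<Delta>2 \<Longrightarrow> vf_add (VF \<Delta>1) (VF \<Delta>2) = VF (\<lambda>h. \<Delta>1 h + \<Delta>2 h)"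
  by (intro ext) (auto simp: vf_add_def VF_def Psi_add sder_S Phi_S)

lemma VF_smult: "sder \<Delta> \<Longrightarrow> vf_smult c (VF \<Delta>) = VF (\<lambda>h. Pz [:c:] * \<Delta> h)"
  by (intro ext) (auto simp: vf_smult_def VF_def Psi_smult sder_S Phi_S)

lemma VF_zero: "vf_zero = VF (\<lambda>h. 0)"
  by (intro ext) (auto simp: vf_zero_def VF_def Psi_zero)

lemma VF_bracket: "sder \<Delta>1 \<Longrightarrow> sder \<Delta>2 \<Longrightarrow> vf_bracket (VF \<Delta>1) (VF \<Delta>2) = VF (\<lambda>h. \<Delta>1 (\<Delta>2 h) - \<Delta>2 (\<Delta>1 h))"
proof (rule ext)
  fix g assume d: "sder \<Delta>1" "sder \<Delta>2"
  show "vf_bracket (VF \<Delta>1) (VF \<Delta>2) g = VF (\<lambda>h. \<Delta>1 (\<Delta>2 h) - \<Delta>2 (\<Delta>1 h)) g"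
  proof (cases "g \<in> Ocr")
    case True
    have "VF \<Delta>1 (VF \<Delta>2 g) = Psi (\<Delta>1 (\<Delta>2 (Phi g)))"
      using True d by (simp add: VF_in Psi_O sder_S Phi_S Phi_Psi)
    moreover have "VF \<Delta>2 (VF \<Delta>1 g) = Psi (\<Delta>2 (\<Delta>1 (Phi g)))"
      using True d by (simp add: VF_in Psi_O sder_S Phi_S Phi_Psi)
    ultimately show ?thesis using True d
      by (simp add: vf_bracket_def VF_in Psi_diff sder_S Phi_S)
  next
    case False
    have z: "VF \<Delta> (\<lambda>_. 0) = (\<lambda>_. 0)" if "sder \<Delta>" for \<Delta>
      using that by (simp add: VF_in Ocr_zero Phi_zero sder_0 Psi_zero)
    show ?thesis using False d z by (simp add: vf_bracket_def VF_out)
  qed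
qed

lemma sder_sum: "sder \<Delta>1 \<Longrightarrow> sder \<Delta>2 \<Longrightarrow> sder (\<lambda>h. \<Delta>1 h + \<Delta>2 h)"
  unfolding sder_def by (simp add: S_add algebra_simps)

lemma sder_scale: "sder \<Delta> \<Longrightarrow> sder (\<lambda>h. Pz [:c:] * \<Delta> h)"
proof -
  assume d: "sder \<Delta>"
  show ?thesis unfolding sder_def
  proof (intro conjI ballI allI)
    fix f assume "f \<in> S" then show "Pz [:c:] * \<Delta> f \<in> S" using d by (simp add: S_mult S_Pz sder_S)
  next
    fix f g assume "f \<in> S" "g \<in> S" then show "Pz [:c:] * \<Delta> (f + g) = Pz [:c:] * \<Delta> f + Pz [:c:] * \<Delta> g"
      using d by (simp add: sder_add distrib_left)
  next
    fix c' f assume "f \<in> S" then show "Pz [:c:] * \<Delta> (Pz [:c':] * f) = Pz [:c':] * (Pz [:c:] * \<Delta> f)"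
      using d by (simp add: sder_smult mult.left_commute)
  next
    fix f g assume "f \<in> S" "g \<in> S" then show "Pz [:c:] * \<Delta> (f * g) = f * (Pz [:c:] * \<Delta> g) + g * (Pz [:c:] * \<Delta> f)"
      using d by (simp add: sder_mult algebra_simps)
  qed
qed

lemma sder_zero: "sder (\<lambda>h. 0)" by (simp add: sder_def)

lemma sder_comm: "sder \<Delta>1 \<Longrightarrow> sder \<Delta>2 \<Longrightarrow> sder (\<lambda>h. \<Delta>1 (\<Delta>2 h) - \<Delta>2 (\<Delta>1 h))"
proof -
  assume d: "sder \<Delta>1" "sder \<Delta>2"
  show ?thesis unfolding sder_def
  proof (intro conjI ballI allI)
    fix f assume "f \<in> S" then show "\<Delta>1 (\<Delta>2 f) - \<Delta>2 (\<Delta>1 f) \<in> S" using d by (simp add: S_diff sder_S)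
  next
    fix f g assume "f \<in> S" "g \<in> S"
    then show "\<Delta>1 (\<Delta>2 (f + g)) - \<Delta>2 (\<Delta>1 (f + g)) = \<Delta>1 (\<Delta>2 f) - \<Delta>2 (\<Delta>1 f) + (\<Delta>1 (\<Delta>2 g) - \<Delta>2 (\<Delta>1 g))"
      using d by (simp add: sder_add sder_S)
  next
    fix c f assume "f \<in> S"
    then show "\<Delta>1 (\<Delta>2 (Pz [:c:] * f)) - \<Delta>2 (\<Delta>1 (Pz [:c:] * f)) = Pz [:c:] * (\<Delta>1 (\<Delta>2 f) - \<Delta>2 (\<Delta>1 f))"
      using d by (simp add: sder_smult sder_S right_diff_distrib)
  next
    fix f g assume fg: "f \<in> S" "g \<in> S"
    have "\<Delta>1 (\<Delta>2 (f * g)) = \<Delta>1 (f * \<Delta>2 g) + \<Delta>1 (g * \<Delta>2 f)"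
      using fg d by (simp add: sder_mult sder_add S_mult sder_S)
    also have "\<dots> = f * \<Delta>1 (\<Delta>2 g) + \<Delta>2 g * \<Delta>1 f + (g * \<Delta>1 (\<Delta>2 f) + \<Delta>2 f * \<Delta>1 g)"
      using fg d by (simp add: sder_mult sder_S)
    finally have 1: "\<Delta>1 (\<Delta>2 (f * g)) = f * \<Delta>1 (\<Delta>2 g) + \<Delta>2 g * \<Delta>1 f + (g * \<Delta>1 (\<Delta>2 f) + \<Delta>2 f * \<Delta>1 g)" .
    have "\<Delta>2 (\<Delta>1 (f * g)) = \<Delta>2 (f * \<Delta>1 g) + \<Delta>2 (g * \<Delta>1 f)"
      using fg d by (simp add: sder_mult sder_add S_mult sder_S)
    also have "\<dots> = f * \<Delta>2 (\<Delta>1 g) + \<Delta>1 g * \<Delta>2 f + (g * \<Delta>2 (\<Delta>1 f) + \<Delta>1 f * \<Delta>2 g)"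
      using fg d by (simp add: sder_mult sder_S)
    finally have 2: "\<Delta>2 (\<Delta>1 (f * g)) = f * \<Delta>2 (\<Delta>1 g) + \<Delta>1 g * \<Delta>2 f + (g * \<Delta>2 (\<Delta>1 f) + \<Delta>1 f * \<Delta>2 g)" .
    show "\<Delta>1 (\<Delta>2 (f * g)) - \<Delta>2 (\<Delta>1 (f * g)) = f * (\<Delta>1 (\<Delta>2 g) - \<Delta>2 (\<Delta>1 g)) + g * (\<Delta>1 (\<Delta>2 f) - \<Delta>2 (\<Delta>1 f))"
      unfolding 1 2 by (simp add: algebra_simps)
  qed
qed

end

lemma dvd_pderiv_pow: "(q::'a::field_char_0 poly) ^ Suc k dvd b \<Longrightarrow> q ^ k dvd pderiv b"
proof -
  assume "q ^ Suc k dvd b"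
  then obtain c where b: "b = q ^ Suc k * c" by (auto elim: dvdE)
  have "pderiv b = q ^ Suc k * pderiv c + c * (smult (of_nat (Suc k)) (q ^ k) * pderiv q)"
    by (simp only: b pderiv_mult pderiv_power_Suc)
  also have "\<dots> = q ^ k * (q * pderiv c + smult (of_nat (Suc k)) (c * pderiv q))"
    by (simp add: algebra_simps)
  finally show ?thesis by simp
qed

context dp begin

lemma S_DzTt: "h \<in> S \<Longrightarrow> Dz h * Tt \<in> S"
proof (induct h rule: S_induct)
  case zero then show ?case by simp
next
  case (add f a b)
  have "p ^ nat (- (a + 1)) dvd pderiv b"
  proof (cases "a \<ge> 0")
    case True then show ?thesis by simp
  next
    case False
    then have "nat (- a) = Suc (nat (- (a + 1)))" by simp
    then show ?thesis using add(2) dvd_pderiv_pow by (metis S_single)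
  qed
  then have "Dz (sng a b) * Tt \<in> S" by (simp add: Dz_single Tt_def mult_single S_single)
  then show ?case using add by (simp add: Dz_add distrib_right S_add)
qed

lemma S_DzYv: "h \<in> S \<Longrightarrow> Dz h * Yv + Ee h * Dz Yv \<in> S"
proof (induct h rule: S_induct)
  case zero then show ?case by simp
next
  case (add f a b)
  have e: "Dz (sng a b) * Yv + Ee (sng a b) * Dz Yv = sng (a - 1) (pderiv b * p + of_int a * b * pderiv p)"
    by (simp add: Dz_single Ee_single Yv_def Dz_Yv mult_single single_add algebra_simps)
  have "p ^ nat (- (a - 1)) dvd pderiv b * p + of_int a * b * pderiv p"
  proof (cases "a \<ge> 1")
    case True then show ?thesis by simp
  next
    case False
    define m where "m = nat (- a)"
    have am: "a = - int m" and nm: "nat (- (a - 1)) = Suc m" using False by (auto simp: m_def)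
    obtain c where b: "b = p ^ m * c" using add(2) by (auto simp: S_single m_def elim: dvdE)
    have "pderiv b * p + of_int a * b * pderiv p = p ^ Suc m * pderiv c"
    proof (cases m)
      case 0 then show ?thesis by (simp add: b am pderiv_mult algebra_simps)
    next
      case (Suc k)
      have "pderiv b * p + of_int a * b * pderiv p
          = (p ^ m * pderiv c + c * (smult (of_nat m) (p ^ k) * pderiv p)) * p - of_nat m * (p ^ m * c) * pderiv p"
        by (simp only: b am pderiv_mult pderiv_power_Suc Suc of_int_minus of_int_of_nat_eq) (simp add: algebra_simps)
      also have "\<dots> = p ^ Suc m * pderiv c"
        by (simp add: Suc algebra_simps of_nat_poly)
      finally show ?thesis .
    qed
    then show ?thesis using nm by simp
  qed
  then have "Dz (sng a b) * Yv + Ee (sng a b) * Dz Yv \<in> S" by (simp only: e S_single)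
  moreover have "Dz (f + sng a b) * Yv + Ee (f + sng a b) * Dz Yv
      = (Dz f * Yv + Ee f * Dz Yv) + (Dz (sng a b) * Yv + Ee (sng a b) * Dz Yv)"
    by (simp add: Dz_add Ee_add algebra_simps)
  ultimately show ?case using add(3) by (simp add: S_add)
qed


lemma pb_Tt: "pb h Tt = Dz h * Tt" by (simp add: pb_def)
lemma pb_Yv: "pb h Yv = - (Dz h * Yv + Ee h * Dz Yv)" by (simp add: pb_def)
lemma pb_Zv: "pb h Zv = - Ee h" by (simp add: pb_def)
lemma pb_const: "pb h (Pz [:c:]) = 0" by (simp add: pb_def Dz_Pz)
lemma pb_const1: "pb (Pz [:c:]) h = 0" by (simp add: pb_def Dz_Pz)
lemma pb_Pz1: "pb (Pz q) h = Pz (pderiv q) * Ee h" by (simp add: pb_def Dz_Pz)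

lemma pb_S: "h \<in> S \<Longrightarrow> f \<in> S \<Longrightarrow> pb h f \<in> S"
proof -
  assume h: "h \<in> S"
  assume "f \<in> S"
  then show ?thesis
  proof (induct f rule: S_gen_induct)
    case Tt then show ?case using h by (simp add: pb_Tt S_DzTt)
  next
    case Yv then show ?case by (simp only: pb_Yv) (rule S_uminus[OF S_DzYv[OF h]])
  next
    case Zv then show ?case using h by (simp add: pb_Zv S_Ee S_uminus)
  next
    case (const c) then show ?case by (simp add: pb_const)
  next
    case (add f g) then show ?case by (simp add: pb_add2 S_add)
  next
    case (mult f g) then show ?case by (simp add: pb_mult2 S_add S_mult)
  qed
qed

lemma sder_pb: "h \<in> S \<Longrightarrow> sder (pb h)"
  unfolding sder_def by (simp add: pb_S pb_add2 pb_mult2 pb_const algebra_simps)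

definition HAM :: "'a lr \<Rightarrow> 'a vfield" where "HAM h = VF (pb h)"

lemma HAM_vfield: "h \<in> S \<Longrightarrow> is_vfield p (HAM h)"
  by (simp add: HAM_def VF_vfield sder_pb)

lemma DL_HAM: "h \<in> S \<Longrightarrow> f \<in> S \<Longrightarrow> DL (HAM h) f = pb h f"
  by (simp add: HAM_def DL_VF sder_pb)

lemma HAM_bracket: "a \<in> S \<Longrightarrow> b \<in> S \<Longrightarrow> vf_bracket (HAM a) (HAM b) = HAM (pb a b)"
proof -
  assume ab: "a \<in> S" "b \<in> S"
  have "vf_bracket (HAM a) (HAM b) = VF (\<lambda>h. pb a (pb b h) - pb b (pb a h))"
    using ab by (simp add: HAM_def VF_bracket sder_pb)
  also have "\<dots> = VF (pb (pb a b))"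
  proof (rule VF_cong)
    fix h
    have "pb a (pb b h) = pb (pb a b) h + pb b (pb a h)" by (rule pb_jacobi)
    then show "pb a (pb b h) - pb b (pb a h) = pb (pb a b) h" by simp
  qed
  finally show ?thesis by (simp add: HAM_def)
qed

lemma HAM_add: "a \<in> S \<Longrightarrow> b \<in> S \<Longrightarrow> vf_add (HAM a) (HAM b) = HAM (a + b)"
proof -
  assume ab: "a \<in> S" "b \<in> S"
  have "vf_add (HAM a) (HAM b) = VF (\<lambda>h. pb a h + pb b h)"
    using ab by (simp add: HAM_def VF_add sder_pb)
  also have "\<dots> = VF (pb (a + b))" by (rule VF_cong) (simp add: pb_add1)
  finally show ?thesis by (simp add: HAM_def)
qed

lemma HAM_smult: "a \<in> S \<Longrightarrow> vf_smult c (HAM a) = HAM (Pz [:c:] * a)"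
proof -
  assume a: "a \<in> S"
  have "vf_smult c (HAM a) = VF (\<lambda>h. Pz [:c:] * pb a h)"
    using a by (simp add: HAM_def VF_smult sder_pb)
  also have "\<dots> = VF (pb (Pz [:c:] * a))" by (rule VF_cong) (simp add: pb_mult1 pb_const1)
  finally show ?thesis by (simp add: HAM_def)
qed

lemma HAM_zero: "HAM 0 = vf_zero"
  unfolding HAM_def VF_zero by (rule VF_cong) simp

lemma HAM_const: "HAM (Pz [:c:]) = vf_zero"
  unfolding HAM_def VF_zero by (rule VF_cong) (simp add: pb_const1)

lemma HAM_diff_const: "HAM (h + Pz [:c:]) = HAM h"
  unfolding HAM_def by (rule VF_cong) (simp add: pb_add1 pb_const1)

lemma Pz_pCons0: "Pz (pCons 0 r) = Zv * Pz r"
  using Pz_pCons[of 0 r] by simp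

lemma Ti_Tt: "Ti * Tt = 1" using Tt_Ti by (simp add: mult.commute)

lemma sder_chain: "sder \<Delta> \<Longrightarrow> \<Delta> (Pz q) = Pz (pderiv q) * \<Delta> Zv"
proof (induct q)
  case 0 then show ?case by (simp add: sder_0)
next
  case (pCons c q)
  have "\<Delta> (Pz (pCons c q)) = \<Delta> (Pz [:c:]) + \<Delta> (Zv * Pz q)"
    using pCons by (simp only: Pz_pCons[of c q]) (simp add: sder_add S_Pz S_Zv S_mult)
  also have "\<dots> = Zv * \<Delta> (Pz q) + Pz q * \<Delta> Zv"
    using pCons by (simp add: sder_const sder_mult S_Pz S_Zv)
  also have "\<dots> = Pz (pderiv (pCons c q)) * \<Delta> Zv"
    using pCons by (simp add: pderiv_pCons Pz_add Pz_pCons0 algebra_simps)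
  finally show ?case .
qed

lemma Ti_Pz: "Ti * Pz q = sng (-1) q" by (simp add: Ti_def Pz_def mult_single)

lemma sder_repr:
  assumes d: "sder \<Delta>" and f: "f \<in> S"
  shows "\<Delta> f = \<Delta> Zv * Dz f + \<Delta> Tt * Ti * Ee f"
  using f
proof (induct f rule: S_gen_induct)
  case Tt then show ?case by (simp add: Ti_Tt mult.assoc)
next
  case Zv then show ?case by simp
next
  case (const c) then show ?case using d by (simp add: sder_const Dz_Pz)
next
  case Yv
  have "\<Delta> (Tt * Yv) = Tt * \<Delta> Yv + Yv * \<Delta> Tt" using d by (simp add: sder_mult S_Tt S_Yv)
  moreover have "\<Delta> (Tt * Yv) = Pz (pderiv p) * \<Delta> Zv" using d by (simp add: Tt_Yv sder_chain)
  ultimately have e: "Tt * \<Delta> Yv = Pz (pderiv p) * \<Delta> Zv - Yv * \<Delta> Tt" by (simp add: eq_diff_eq)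
  have "\<Delta> Yv = Ti * (Tt * \<Delta> Yv)" by (simp add: mult.assoc[symmetric] Ti_Tt)
  also have "\<dots> = (Ti * Pz (pderiv p)) * \<Delta> Zv - \<Delta> Tt * Ti * Yv" by (simp only: e right_diff_distrib mult_ac)
  also have "\<dots> = \<Delta> Zv * Dz Yv + \<Delta> Tt * Ti * Ee Yv" by (simp add: Ti_Pz Dz_Yv mult.commute)
  finally show ?case .
next
  case (add f g) then show ?case using d by (simp add: sder_add Dz_add Ee_add algebra_simps)
next
  case (mult f g) then show ?case using d by (simp add: sder_mult Dz_mult Ee_mult algebra_simps)
qed

end

context dp begin

lemma funpow_S: "(\<And>x. x \<in> S \<Longrightarrow> D x \<in> S) \<Longrightarrow> x \<in> S \<Longrightarrow> (D ^^ n) x \<in> S"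
  by (induct n) auto

lemma funpow_add_S:
  assumes "\<And>x. x \<in> S \<Longrightarrow> D x \<in> S" "\<And>u v. u \<in> S \<Longrightarrow> v \<in> S \<Longrightarrow> D (u + v) = D u + D v"
  shows "u \<in> S \<Longrightarrow> v \<in> S \<Longrightarrow> (D ^^ n) (u + v) = (D ^^ n) u + (D ^^ n) v"
  by (induct n) (simp_all add: assms funpow_S)

lemma funpow_zero: "(D :: 'a lr \<Rightarrow> 'a lr) 0 = 0 \<Longrightarrow> (D ^^ n) 0 = 0"
  by (induct n) auto

lemma GL_nil:
  fixes D \<Delta> :: "'a lr \<Rightarrow> 'a lr" and M :: "'a lr \<Rightarrow> 'a lr \<Rightarrow> 'a lr"
  assumes \<Delta>S: "\<And>x. x \<in> S \<Longrightarrow> \<Delta> x \<in> S"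
    and DS: "\<And>x. x \<in> S \<Longrightarrow> D x \<in> S"
    and Dadd: "\<And>u v. u \<in> S \<Longrightarrow> v \<in> S \<Longrightarrow> D (u + v) = D u + D v"
    and MS: "\<And>x y. x \<in> S \<Longrightarrow> y \<in> S \<Longrightarrow> M x y \<in> S"
    and M0: "\<And>y. M 0 y = 0" "\<And>x. M x 0 = 0"
    and D0: "D 0 = 0"
    and rule: "\<And>x y. x \<in> S \<Longrightarrow> y \<in> S \<Longrightarrow> D (M x y) = M (\<Delta> x) y + M x (\<Delta> y)"
  shows "x \<in> S \<Longrightarrow> y \<in> S \<Longrightarrow> (\<Delta> ^^ a) x = 0 \<Longrightarrow> (\<Delta> ^^ b) y = 0 \<Longrightarrow> (D ^^ (a + b)) (M x y) = 0"
proof (induct "a + b" arbitrary: x y a b)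
  case 0 then show ?case using M0 by simp
next
  case (Suc n)
  show ?case
  proof (cases "a = 0 \<or> b = 0")
    case True
    then have "x = 0 \<or> y = 0" using Suc by auto
    then show ?thesis using M0 funpow_zero[of D] D0 by auto
  next
    case False
    then obtain a' b' where ab: "a = Suc a'" "b = Suc b'" by (meson not0_implies_Suc)
    have "(D ^^ (a + b)) (M x y) = (D ^^ n) (D (M x y))"
      using Suc(2) by (metis funpow_Suc_right o_apply)
    also have "\<dots> = (D ^^ n) (M (\<Delta> x) y) + (D ^^ n) (M x (\<Delta> y))"
      using Suc by (simp add: rule funpow_add_S[OF DS Dadd] MS \<Delta>S)
    also have "(D ^^ n) (M (\<Delta> x) y) = 0"
    proof -
      have "(\<Delta> ^^ a') (\<Delta> x) = 0" using Suc(5) ab by (metis funpow_Suc_right o_apply)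
      moreover have "n = a' + b" using Suc(2) ab by simp
      ultimately show ?thesis using Suc(1)[of a' b "\<Delta> x" y] Suc \<Delta>S by simp
    qed
    also have "(D ^^ n) (M x (\<Delta> y)) = 0"
    proof -
      have "(\<Delta> ^^ b') (\<Delta> y) = 0" using Suc(6) ab by (metis funpow_Suc_right o_apply)
      moreover have "n = a + b'" using Suc(2) ab by simp
      ultimately show ?thesis using Suc(1)[of a b' x "\<Delta> y"] Suc \<Delta>S by simp
    qed
    finally show ?thesis by simp
  qed
qed

lemma sder_funpow_S: "sder \<Delta> \<Longrightarrow> x \<in> S \<Longrightarrow> (\<Delta> ^^ n) x \<in> S"
  by (rule funpow_S) (simp_all add: sder_S)

lemma sder_kernel_mult:
  assumes d: "sder \<Delta>" and f: "f \<in> S" "\<Delta> f = 0" and u: "u \<in> S"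
  shows "(\<Delta> ^^ k) (f * u) = f * (\<Delta> ^^ k) u"
proof (induct k)
  case 0 then show ?case by simp
next
  case (Suc k)
  have "(\<Delta> ^^ Suc k) (f * u) = \<Delta> (f * (\<Delta> ^^ k) u)" using Suc by simp
  also have "\<dots> = f * \<Delta> ((\<Delta> ^^ k) u)" using d f sder_funpow_S[OF d u] by (simp add: sder_mult)
  finally show ?case by simp
qed

lemma LT:
  assumes d: "sder \<Delta>"
  shows "f \<in> S \<Longrightarrow> g \<in> S \<Longrightarrow> (\<Delta> ^^ Suc a) f = 0 \<Longrightarrow> (\<Delta> ^^ Suc b) g = 0 \<Longrightarrow>
    \<exists>c::nat. c > 0 \<and> (\<Delta> ^^ (a + b)) (f * g) = of_nat c * ((\<Delta> ^^ a) f * (\<Delta> ^^ b) g)"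
proof (induct "a + b" arbitrary: f g a b)
  case 0 then show ?case by (intro exI[of _ 1]) simp
next
  case (Suc n)
  show ?case
  proof (cases "a = 0")
    case True
    then have "\<Delta> f = 0" using Suc by simp
    then have "(\<Delta> ^^ (a + b)) (f * g) = f * (\<Delta> ^^ b) g"
      using sder_kernel_mult[OF d Suc(3) _ Suc(4)] True by simp
    then show ?thesis using True by (intro exI[of _ 1]) simp
  next
    case a: False
    show ?thesis
    proof (cases "b = 0")
      case True
      then have "\<Delta> g = 0" using Suc by simp
      then have "(\<Delta> ^^ (a + b)) (g * f) = g * (\<Delta> ^^ a) f"
        using sder_kernel_mult[OF d Suc(4) _ Suc(3)] True by simp
      then show ?thesis using True by (intro exI[of _ 1]) (simp add: mult.commute)
    next
      case b: False
      obtain a' b' where ab: "a = Suc a'" "b = Suc b'" using a b by (meson not0_implies_Suc)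
      have "(\<Delta> ^^ (a + b)) (f * g) = (\<Delta> ^^ n) (\<Delta> (f * g))"
        using Suc(2) by (metis funpow_Suc_right o_apply)
      also have "\<dots> = (\<Delta> ^^ n) (\<Delta> f * g) + (\<Delta> ^^ n) (f * \<Delta> g)"
        using Suc d by (simp add: sder_mult funpow_add_S[OF sder_S[OF d] sder_add[OF d]] S_mult sder_S algebra_simps)
      finally have e: "(\<Delta> ^^ (a + b)) (f * g) = (\<Delta> ^^ n) (\<Delta> f * g) + (\<Delta> ^^ n) (f * \<Delta> g)" .
      have h1: "(\<Delta> ^^ Suc a') (\<Delta> f) = 0" using Suc(5) ab by (metis funpow_Suc_right o_apply)
      have h2: "(\<Delta> ^^ Suc b') (\<Delta> g) = 0" using Suc(6) ab by (metis funpow_Suc_right o_apply)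
      obtain c1 where c1: "c1 > 0" "(\<Delta> ^^ (a' + b)) (\<Delta> f * g) = of_nat c1 * ((\<Delta> ^^ a') (\<Delta> f) * (\<Delta> ^^ b) g)"
        using Suc(1)[of a' b "\<Delta> f" g] Suc(2) ab Suc(3,4,6) h1 sder_S[OF d] by auto
      obtain c2 where c2: "c2 > 0" "(\<Delta> ^^ (a + b')) (f * \<Delta> g) = of_nat c2 * ((\<Delta> ^^ a) f * (\<Delta> ^^ b') (\<Delta> g))"
        using Suc(1)[of a b' f "\<Delta> g"] Suc(2) ab Suc(3,4,5) h2 sder_S[OF d] by auto
      have "(\<Delta> ^^ a') (\<Delta> f) = (\<Delta> ^^ a) f" using ab by (metis funpow_Suc_right o_apply)
      moreover have "(\<Delta> ^^ b') (\<Delta> g) = (\<Delta> ^^ b) g" using ab by (metis funpow_Suc_right o_apply)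
      moreover have "n = a' + b" "n = a + b'" using Suc(2) ab by simp_all
      ultimately have "(\<Delta> ^^ (a + b)) (f * g) = of_nat (c1 + c2) * ((\<Delta> ^^ a) f * (\<Delta> ^^ b) g)"
        using e c1 c2 by (simp add: algebra_simps)
      then show ?thesis using c1 by (intro exI[of _ "c1 + c2"]) simp
    qed
  qed
qed


lemma key_identity:
  fixes f g \<alpha> \<beta> :: "'b::field_char_0 lr"
  shows "pb (\<alpha> * Dz f + \<beta> * Ee f) g + pb f (\<alpha> * Dz g + \<beta> * Ee g)
    = \<alpha> * Dz (pb f g) + \<beta> * Ee (pb f g) + (Dz \<alpha> + Ee \<beta>) * pb f g"
  unfolding pb_def by (simp add: Dz_mult Ee_mult Dz_add Ee_add Dz_diff Ee_diff Ee_Dz algebra_simps)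

lemma br_Zv_id:
  fixes a1 a2 b1 b2 :: "'b::field_char_0 lr"
  assumes "Dz a1 = - Ee b1" "Dz a2 = - Ee b2"
  shows "(a1 * Dz a2 + b1 * Ee a2) - (a2 * Dz a1 + b2 * Ee a1) = - Ee (a1 * b2 - a2 * b1)"
  using assms by (simp add: Ee_mult Ee_diff algebra_simps)

lemma br_Tt_id:
  fixes a1 a2 b1 b2 :: "'b::field_char_0 lr"
  assumes "Dz a1 = - Ee b1" "Dz a2 = - Ee b2"
  shows "(a1 * Dz (b2 * Tt) + b1 * Ee (b2 * Tt)) - (a2 * Dz (b1 * Tt) + b2 * Ee (b1 * Tt)) = Dz (a1 * b2 - a2 * b1) * Tt"
  using assms by (simp add: Ee_mult Dz_mult Dz_diff algebra_simps)

definition alp :: "('a lr \<Rightarrow> 'a lr) \<Rightarrow> 'a lr" where "alp \<Delta> = \<Delta> Zv"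
definition bet :: "('a lr \<Rightarrow> 'a lr) \<Rightarrow> 'a lr" where "bet \<Delta> = \<Delta> Tt * Ti"
definition divg :: "('a lr \<Rightarrow> 'a lr) \<Rightarrow> 'a lr" where "divg \<Delta> = Dz (alp \<Delta>) + Ee (bet \<Delta>)"

lemma sder_repr': "sder \<Delta> \<Longrightarrow> f \<in> S \<Longrightarrow> \<Delta> f = alp \<Delta> * Dz f + bet \<Delta> * Ee f"
  using sder_repr by (simp add: alp_def bet_def)

lemma bet_Tt: "bet \<Delta> * Tt = \<Delta> Tt" by (simp add: bet_def mult.assoc Ti_Tt)

lemma sder_identity:
  assumes d: "sder \<Delta>" and fg: "f \<in> S" "g \<in> S"
  shows "pb (\<Delta> f) g + pb f (\<Delta> g) = \<Delta> (pb f g) + divg \<Delta> * pb f g"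
  using key_identity[of "alp \<Delta>" f "bet \<Delta>" g] d fg
  by (simp add: sder_repr'[OF d] pb_S divg_def)

lemma pb_Zv_Tt: "pb Zv Tt = Tt" by (simp add: pb_def)
lemma pb_Zv_Yv: "pb Zv Yv = - Yv" by (simp add: pb_def)
lemma pb_Tt_Yv: "pb Tt Yv = - Pz (pderiv p)" by (simp add: pb_def Tt_DzYv)

lemma divg_mult_S: "sder \<Delta> \<Longrightarrow> f \<in> S \<Longrightarrow> g \<in> S \<Longrightarrow> divg \<Delta> * pb f g \<in> S"
proof -
  assume d: "sder \<Delta>" and fg: "f \<in> S" "g \<in> S"
  have "divg \<Delta> * pb f g = pb (\<Delta> f) g + pb f (\<Delta> g) - \<Delta> (pb f g)"
    using sder_identity[OF d fg] by (simp add: algebra_simps)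
  also have "\<dots> \<in> S"
    using fg by (intro S_diff S_add pb_S sder_S[OF d] fg)
  finally show ?thesis .
qed

lemma divg_S: "sder \<Delta> \<Longrightarrow> divg \<Delta> \<in> S"
proof -
  assume d: "sder \<Delta>"
  have 1: "divg \<Delta> * Tt \<in> S" using divg_mult_S[OF d S_Zv S_Tt] by (simp add: pb_Zv_Tt)
  have "divg \<Delta> * (- Yv) \<in> S" using divg_mult_S[OF d S_Zv S_Yv] by (simp add: pb_Zv_Yv)
  then have 2: "divg \<Delta> * Yv \<in> S" using S_uminus by fastforce
  have "divg \<Delta> * (- Pz (pderiv p)) \<in> S" using divg_mult_S[OF d S_Tt S_Yv] by (simp add: pb_Tt_Yv)
  then have 3: "divg \<Delta> * Pz (pderiv p) \<in> S" using S_uminus by fastforce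
  show ?thesis by (rule S_bezout[OF 1 2 3])
qed


lemma least_nil:
  fixes \<Delta> :: "'a lr \<Rightarrow> 'a lr"
  assumes "(\<Delta> ^^ n) (x :: 'a lr) = 0" "x \<noteq> 0"
  shows "\<exists>a. (\<Delta> ^^ Suc a) x = 0 \<and> (\<Delta> ^^ a) x \<noteq> 0"
proof -
  define m where "m = (LEAST n. (\<Delta> ^^ n) x = 0)"
  have m: "(\<Delta> ^^ m) x = 0" unfolding m_def by (rule LeastI[of _ n]) (rule assms(1))
  have "m \<noteq> 0"
  proof
    assume "m = 0" then show False using m assms(2) by simp
  qed
  then obtain a where a: "m = Suc a" by (meson not0_implies_Suc)
  have "(\<Delta> ^^ a) x \<noteq> 0"
  proof
    assume "(\<Delta> ^^ a) x = 0"
    then have "m \<le> a" unfolding m_def by (rule Least_le)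
    then show False using a by simp
  qed
  then show ?thesis using m a by blast
qed

lemma T_nonzero:
  assumes d: "sder \<Delta>" and lnd: "\<forall>f\<in>S. \<exists>n. (\<Delta> ^^ n) f = 0"
    and \<delta>: "\<delta> \<in> S" "\<delta> \<noteq> 0" and h: "h \<in> S" "h \<noteq> 0"
  shows "\<Delta> h + \<delta> * h \<noteq> 0"
proof
  assume T0: "\<Delta> h + \<delta> * h = 0"
  obtain n1 where "(\<Delta> ^^ n1) \<delta> = 0" using lnd \<delta> by blast
  then obtain a where a: "(\<Delta> ^^ Suc a) \<delta> = 0" "(\<Delta> ^^ a) \<delta> \<noteq> 0" using least_nil \<delta>(2) by blast
  obtain n2 where "(\<Delta> ^^ n2) h = 0" using lnd h by blast
  then obtain b where b: "(\<Delta> ^^ Suc b) h = 0" "(\<Delta> ^^ b) h \<noteq> 0" using least_nil h(2) by blast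
  obtain c :: nat where c: "c > 0" "(\<Delta> ^^ (a + b)) (\<delta> * h) = of_nat c * ((\<Delta> ^^ a) \<delta> * (\<Delta> ^^ b) h)"
    using LT[OF d \<delta>(1) h(1) a(1) b(1)] by blast
  have nz: "(\<Delta> ^^ (a + b)) (\<delta> * h) \<noteq> 0" using c a(2) b(2) by simp
  have "(\<Delta> ^^ Suc b) h = (\<Delta> ^^ b) (\<Delta> h)" by (metis funpow_Suc_right o_apply)
  then have "(\<Delta> ^^ (a + b)) (\<Delta> h) = (\<Delta> ^^ a) ((\<Delta> ^^ Suc b) h)"
    by (simp add: funpow_add)
  also have "\<dots> = 0" using b(1) funpow_zero[of \<Delta>] sder_0[OF d] by simp
  finally have z: "(\<Delta> ^^ (a + b)) (\<Delta> h) = 0" .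
  have "(\<Delta> ^^ (a + b)) (\<Delta> h + \<delta> * h) = (\<Delta> ^^ (a + b)) (\<Delta> h) + (\<Delta> ^^ (a + b)) (\<delta> * h)"
    using d h \<delta> by (intro funpow_add_S) (auto simp: sder_S sder_add S_mult)
  then have "(\<Delta> ^^ (a + b)) (\<Delta> h + \<delta> * h) \<noteq> 0" using z nz by simp
  then show False using T0 funpow_zero[of \<Delta>] sder_0[OF d] by simp
qed

lemma LND_div0:
  assumes d: "sder \<Delta>" and lnd: "\<forall>f\<in>S. \<exists>n. (\<Delta> ^^ n) f = 0"
  shows "divg \<Delta> = 0"
proof (rule ccontr)
  assume nz: "divg \<Delta> \<noteq> 0"
  define \<delta> where "\<delta> = divg \<Delta>"
  have \<delta>S: "\<delta> \<in> S" using divg_S[OF d] by (simp add: \<delta>_def)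
  define T where "T = (\<lambda>u. \<Delta> u + \<delta> * u)"
  have TS: "\<And>u. u \<in> S \<Longrightarrow> T u \<in> S" using d \<delta>S by (simp add: T_def S_add S_mult sder_S)
  have Tadd: "\<And>u v. u \<in> S \<Longrightarrow> v \<in> S \<Longrightarrow> T (u + v) = T u + T v"
    using d by (simp add: T_def sder_add algebra_simps)
  have T0: "T 0 = 0" using d by (simp add: T_def sder_0)
  have Tpb: "\<And>x y. x \<in> S \<Longrightarrow> y \<in> S \<Longrightarrow> T (pb x y) = pb (\<Delta> x) y + pb x (\<Delta> y)"
    using sder_identity[OF d] by (simp add: T_def \<delta>_def)
  have Tnz: "(T ^^ n) Tt \<noteq> 0 \<and> (T ^^ n) Tt \<in> S" for n
  proof (induct n)
    case 0 then show ?case by (simp add: Tt_nz S_Tt)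
  next
    case (Suc n)
    then show ?case using T_nonzero[OF d lnd \<delta>S] nz TS by (simp add: T_def \<delta>_def)
  qed
  obtain a where a: "(\<Delta> ^^ a) Zv = 0" using lnd S_Zv by blast
  obtain b where b: "(\<Delta> ^^ b) Tt = 0" using lnd S_Tt by blast
  have "(T ^^ (a + b)) (pb Zv Tt) = 0"
    by (rule GL_nil[of \<Delta> T pb Zv Tt a b, OF sder_S[OF d] TS Tadd pb_S pb_0(1) pb_0(2) T0 Tpb S_Zv S_Tt a b])
  then show False using Tnz[of "a + b"] by (simp add: pb_Zv_Tt)
qed

lemma PD_of_div0:
  assumes d: "sder \<Delta>" and z: "divg \<Delta> = 0" and fg: "f \<in> S" "g \<in> S"
  shows "\<Delta> (pb f g) = pb (\<Delta> f) g + pb f (\<Delta> g)"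
  using sder_identity[OF d fg] z by simp

lemma PD_bracket:
  assumes d1: "sder \<Delta>1" and d2: "sder \<Delta>2" and z1: "divg \<Delta>1 = 0" and z2: "divg \<Delta>2 = 0"
  defines "h \<equiv> alp \<Delta>1 * bet \<Delta>2 - alp \<Delta>2 * bet \<Delta>1"
  shows "h \<in> S" and "\<And>f. f \<in> S \<Longrightarrow> \<Delta>1 (\<Delta>2 f) - \<Delta>2 (\<Delta>1 f) = pb h f"
proof -
  let ?a1 = "alp \<Delta>1" and ?a2 = "alp \<Delta>2" and ?b1 = "bet \<Delta>1" and ?b2 = "bet \<Delta>2"
  have e1: "Dz ?a1 = - Ee ?b1" using z1 by (simp add: divg_def eq_neg_iff_add_eq_0)
  have e2: "Dz ?a2 = - Ee ?b2" using z2 by (simp add: divg_def eq_neg_iff_add_eq_0)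
  have a1S: "?a1 \<in> S" using d1 by (simp add: alp_def sder_S S_Zv)
  have a2S: "?a2 \<in> S" using d2 by (simp add: alp_def sder_S S_Zv)
  have t1: "\<Delta>1 Tt = ?b1 * Tt" by (simp add: bet_Tt)
  have t2: "\<Delta>2 Tt = ?b2 * Tt" by (simp add: bet_Tt)
  have y1: "\<Delta>1 Yv = ?a1 * Dz Yv - ?b1 * Yv" using sder_repr'[OF d1 S_Yv] by simp
  have y2: "\<Delta>2 Yv = ?a2 * Dz Yv - ?b2 * Yv" using sder_repr'[OF d2 S_Yv] by simp
  have "h * Tt = ?a1 * \<Delta>2 Tt - ?a2 * \<Delta>1 Tt" by (simp add: t1 t2 h_def algebra_simps)
  then have hT: "h * Tt \<in> S" using a1S a2S d1 d2 by (simp add: S_diff S_mult sder_S S_Tt)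
  have "h * Yv = ?a2 * \<Delta>1 Yv - ?a1 * \<Delta>2 Yv" by (simp add: y1 y2 h_def algebra_simps)
  then have hY: "h * Yv \<in> S" using a1S a2S d1 d2 by (simp add: S_diff S_mult sder_S S_Yv)
  have "h * Pz (pderiv p) = \<Delta>2 Tt * \<Delta>1 Yv - \<Delta>1 Tt * \<Delta>2 Yv"
    by (simp add: t1 t2 y1 y2 h_def Tt_DzYv[symmetric] algebra_simps)
  then have hP: "h * Pz (pderiv p) \<in> S" using d1 d2 by (simp add: S_diff S_mult sder_S S_Yv S_Tt)
  show hS: "h \<in> S" by (rule S_bezout[OF hT hY hP])
  have dc: "sder (\<lambda>f. \<Delta>1 (\<Delta>2 f) - \<Delta>2 (\<Delta>1 f))" by (rule sder_comm[OF d1 d2])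
  have dh: "sder (pb h)" by (rule sder_pb[OF hS])
  have cZ: "\<Delta>1 (\<Delta>2 Zv) - \<Delta>2 (\<Delta>1 Zv) = pb h Zv"
  proof -
    have "\<Delta>1 (\<Delta>2 Zv) = ?a1 * Dz ?a2 + ?b1 * Ee ?a2" using sder_repr'[OF d1 a2S] by (simp add: alp_def)
    moreover have "\<Delta>2 (\<Delta>1 Zv) = ?a2 * Dz ?a1 + ?b2 * Ee ?a1" using sder_repr'[OF d2 a1S] by (simp add: alp_def)
    ultimately show ?thesis using br_Zv_id[OF e1 e2] by (simp add: pb_Zv h_def)
  qed
  have cT: "\<Delta>1 (\<Delta>2 Tt) - \<Delta>2 (\<Delta>1 Tt) = pb h Tt"
  proof -
    have b2S: "?b2 * Tt \<in> S" using d2 by (simp add: t2[symmetric] sder_S S_Tt)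
    have b1S: "?b1 * Tt \<in> S" using d1 by (simp add: t1[symmetric] sder_S S_Tt)
    have "\<Delta>1 (\<Delta>2 Tt) = ?a1 * Dz (?b2 * Tt) + ?b1 * Ee (?b2 * Tt)" using sder_repr'[OF d1 b2S] by (simp add: t2)
    moreover have "\<Delta>2 (\<Delta>1 Tt) = ?a2 * Dz (?b1 * Tt) + ?b2 * Ee (?b1 * Tt)" using sder_repr'[OF d2 b1S] by (simp add: t1)
    ultimately show ?thesis using br_Tt_id[OF e1 e2] by (simp add: pb_Tt h_def)
  qed
  fix f assume f: "f \<in> S"
  have "\<Delta>1 (\<Delta>2 f) - \<Delta>2 (\<Delta>1 f) = alp (\<lambda>f. \<Delta>1 (\<Delta>2 f) - \<Delta>2 (\<Delta>1 f)) * Dz f + bet (\<lambda>f. \<Delta>1 (\<Delta>2 f) - \<Delta>2 (\<Delta>1 f)) * Ee f"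
    using sder_repr'[OF dc f] by simp
  also have "\<dots> = alp (pb h) * Dz f + bet (pb h) * Ee f"
    by (simp add: alp_def bet_def cZ cT)
  also have "\<dots> = pb h f" using sder_repr'[OF dh f] by simp
  finally show "\<Delta>1 (\<Delta>2 f) - \<Delta>2 (\<Delta>1 f) = pb h f" .
qed

end

context dp begin

definition sLND :: "('a lr \<Rightarrow> 'a lr) \<Rightarrow> bool" where
  "sLND \<Delta> \<longleftrightarrow> (\<forall>f\<in>S. \<exists>n. (\<Delta> ^^ n) f = 0)"

lemma Ee_1[simp]: "Ee 1 = 0" using Ee_Pz[of 1] by simp
lemma Dz_1[simp]: "Dz 1 = 0" using Dz_Pz[of 1] by simp

lemma funpow_more: "((\<Delta> :: 'a lr \<Rightarrow> 'a lr) ^^ n) f = 0 \<Longrightarrow> \<Delta> 0 = 0 \<Longrightarrow> (\<Delta> ^^ (k + n)) f = 0"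
  by (simp add: funpow_add funpow_zero)

lemma sLND_gen:
  assumes d: "sder \<Delta>" and t: "(\<Delta> ^^ n1) Tt = 0" and y: "(\<Delta> ^^ n2) Yv = 0" and z: "(\<Delta> ^^ n3) Zv = 0"
  shows "sLND \<Delta>"
  unfolding sLND_def
proof
  fix f assume "f \<in> S"
  then show "\<exists>n. (\<Delta> ^^ n) f = 0"
  proof (induct f rule: S_gen_induct)
    case Tt then show ?case using t by blast
  next
    case Yv then show ?case using y by blast
  next
    case Zv then show ?case using z by blast
  next
    case (const c)
    have "(\<Delta> ^^ 1) (Pz [:c:]) = 0" using d by (simp add: sder_const)
    then show ?case by blast
  next
    case (add f g)
    then obtain a b where a: "(\<Delta> ^^ a) f = 0" and b: "(\<Delta> ^^ b) g = 0" by blast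
    have "(\<Delta> ^^ (b + a)) f = 0" by (rule funpow_more[OF a sder_0[OF d]])
    moreover have "(\<Delta> ^^ (a + b)) g = 0" by (rule funpow_more[OF b sder_0[OF d]])
    ultimately have "(\<Delta> ^^ (a + b)) (f + g) = 0"
      using add d by (simp add: funpow_add_S[OF sder_S[OF d] sder_add[OF d]] add.commute)
    then show ?case by blast
  next
    case (mult f g)
    then obtain a b where a: "(\<Delta> ^^ a) f = 0" and b: "(\<Delta> ^^ b) g = 0" by blast
    have "(\<Delta> ^^ (a + b)) (f * g) = 0"
      by (rule GL_nil[of \<Delta> \<Delta> times f g a b, OF sder_S[OF d] sder_S[OF d] sder_add[OF d] S_mult _ _ sder_0[OF d] _ mult(1,2) a b])
         (simp_all add: sder_mult[OF d] algebra_simps)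
    then show ?case by blast
  qed
qed

lemma p3: "pderiv (pderiv (pderiv p)) = 0"
  by (simp add: pderiv_p pderiv_pCons)

lemma pb_Tt_left: "pb Tt f = - (Tt * Dz f)" by (simp add: pb_def)
lemma pb_Yv_left: "pb Yv f = Dz Yv * Ee f + Yv * Dz f" by (simp add: pb_def)

lemma sLND_Tt: "sLND (pb Tt)"
proof (rule sLND_gen[OF sder_pb[OF S_Tt]])
  show "(pb Tt ^^ 1) Tt = 0" by (simp add: pb_Tt_left)
  show "(pb Tt ^^ 2) Zv = 0" by (simp add: pb_Tt_left numeral_2_eq_2 Dz_uminus)
  have "(pb Tt ^^ 3) Yv = pb Tt (pb Tt (pb Tt Yv))" by (simp add: numeral_3_eq_3)
  also have "\<dots> = 0"
    by (simp add: pb_Tt_left Tt_DzYv Dz_uminus Dz_Pz Dz_mult p3)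
  finally show "(pb Tt ^^ 3) Yv = 0" .
qed

lemma sLND_Yv: "sLND (pb Yv)"
proof (rule sLND_gen[OF sder_pb[OF S_Yv]])
  show "(pb Yv ^^ 1) Yv = 0" by (simp add: pb_Yv_left)
  show "(pb Yv ^^ 2) Zv = 0" by (simp add: pb_Yv_left numeral_2_eq_2)
  have "(pb Yv ^^ 3) Tt = pb Yv (pb Yv (pb Yv Tt))" by (simp add: numeral_3_eq_3)
  also have "\<dots> = 0"
    by (simp add: pb_Yv_left mult.commute[of "Dz Yv" Tt] Tt_DzYv Dz_Pz Dz_mult Ee_mult p3)
  finally show "(pb Yv ^^ 3) Tt = 0" .
qed

lemma sLND_scale:
  assumes d: "sder \<Delta>" and l: "sLND \<Delta>" and w: "w \<in> S" "\<Delta> w = 0"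
  shows "sLND (\<lambda>f. w * \<Delta> f)"
proof -
  have kw: "\<Delta> (w ^ m) = 0" for m
  proof (induct m)
    case 0 then show ?case using sder_1[OF d] by simp
  next
    case (Suc m) then show ?case using d w by (simp add: sder_mult S_power)
  qed
  have it: "((\<lambda>f. w * \<Delta> f) ^^ m) f = w ^ m * (\<Delta> ^^ m) f" if f: "f \<in> S" for f m
  proof (induct m)
    case 0 then show ?case by simp
  next
    case (Suc m)
    have "((\<lambda>f. w * \<Delta> f) ^^ Suc m) f = w * \<Delta> (w ^ m * (\<Delta> ^^ m) f)" using Suc by simp
    also have "\<dots> = w * (w ^ m * \<Delta> ((\<Delta> ^^ m) f))"
      using d w f kw by (simp add: sder_mult S_power sder_funpow_S)
    finally show ?case by (simp add: algebra_simps)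
  qed
  show ?thesis unfolding sLND_def
  proof
    fix f assume f: "f \<in> S"
    then obtain n where "(\<Delta> ^^ n) f = 0" using l by (auto simp: sLND_def)
    then show "\<exists>n. ((\<lambda>f. w * \<Delta> f) ^^ n) f = 0" using it[OF f] by auto
  qed
qed

lemma pb_power1: "pb (f ^ Suc k) g = of_nat (Suc k) * f ^ k * pb f g"
proof (induct k)
  case 0 then show ?case by simp
next
  case (Suc k)
  have "pb (f ^ Suc (Suc k)) g = pb (f * f ^ Suc k) g" by simp
  also have "\<dots> = pb f g * f ^ Suc k + f * pb (f ^ Suc k) g" by (rule pb_mult1)
  also have "\<dots> = of_nat (Suc (Suc k)) * f ^ Suc k * pb f g" using Suc by (simp add: algebra_simps)
  finally show ?case .
qed

lemma sLND_power:
  assumes w: "w \<in> S" and l: "sLND (pb w)" and k: "pb w (w ^ k) = 0"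
  shows "sLND (pb (w ^ Suc k))"
proof -
  have "sLND (\<lambda>f. (of_nat (Suc k) * w ^ k) * pb w f)"
  proof (rule sLND_scale[OF sder_pb[OF w] l])
    have ofn: "(of_nat (Suc k) :: 'a lr) = Pz [:of_nat (Suc k):]" by (metis Pz_def of_nat_poly single_of_nat)
    then show "of_nat (Suc k) * w ^ k \<in> S" using w by (simp add: S_mult S_Pz S_power)
    have "pb w (of_nat (Suc k)) = 0" by (simp only: ofn pb_const)
    then show "pb w (of_nat (Suc k) * w ^ k) = 0" using k by (simp add: pb_mult2)
  qed
  moreover have "(\<lambda>f. (of_nat (Suc k) * w ^ k) * pb w f) = pb (w ^ Suc k)"
    by (rule ext) (simp only: pb_power1)
  ultimately show ?thesis by simp
qed

lemma HAM_lnd: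
  assumes h: "h \<in> S" and l: "sLND (pb h)"
  shows "is_lnd p (HAM h)"
  unfolding is_lnd_def
proof (intro conjI ballI)
  show v: "is_vfield p (HAM h)" by (rule HAM_vfield[OF h])
  fix f assume f: "f \<in> Ocr"
  obtain n where n: "(pb h ^^ n) (Phi f) = 0" using l f Phi_S by (auto simp: sLND_def)
  have it: "(DL (HAM h) ^^ m) u = (pb h ^^ m) u" if "u \<in> S" for u m
  proof (induct m)
    case 0 then show ?case by simp
  next
    case (Suc m) then show ?case using that h by (simp add: DL_HAM funpow_S pb_S)
  qed
  have "(HAM h ^^ n) f = (HAM h ^^ n) (Psi (Phi f))" using f by (simp add: Psi_Phi)
  also have "\<dots> = Psi ((DL (HAM h) ^^ n) (Phi f))" using DL_iter[OF v Phi_S[OF f]] by simp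
  also have "\<dots> = Psi 0" using it[OF Phi_S[OF f]] n by simp
  finally show "\<exists>n. (HAM h ^^ n) f = (\<lambda>_. 0)" using Psi_zero by auto
qed

lemma Dz_Tt_power: "Dz (Tt ^ k) = 0" by (simp add: Tt_power Dz_single)

lemma HAM_Tt_lnd: "is_lnd p (HAM (Tt ^ Suc k))"
  by (rule HAM_lnd[OF S_power[OF S_Tt] sLND_power[OF S_Tt sLND_Tt]]) (simp add: pb_Tt_left Dz_Tt_power)

lemma pb_Yv_Yv_power: "pb Yv (Yv ^ k) = 0"
  by (induct k) (simp_all add: pb_mult2 pb_Yv_left)

lemma HAM_Yv_lnd: "is_lnd p (HAM (Yv ^ Suc k))"
  by (rule HAM_lnd[OF S_power[OF S_Yv] sLND_power[OF S_Yv sLND_Yv pb_Yv_Yv_power]])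


definition PDV :: "'a vfield \<Rightarrow> bool" where
  "PDV D \<longleftrightarrow> is_vfield p D \<and> divg (DL D) = 0"

lemma PDV_lnd: "is_lnd p D \<Longrightarrow> PDV D"
proof -
  assume l: "is_lnd p D"
  then have v: "is_vfield p D" by (simp add: is_lnd_def)
  have "\<forall>f\<in>S. \<exists>n. (DL D ^^ n) f = 0"
  proof
    fix f assume f: "f \<in> S"
    obtain n where n: "(D ^^ n) (Psi f) = (\<lambda>_. 0)" using l f Psi_O by (auto simp: is_lnd_def)
    have "Psi ((DL D ^^ n) f) = Psi 0" using DL_iter[OF v f, of n] n Psi_zero by simp
    then have "(DL D ^^ n) f = 0" using Psi_inj DL_iter[OF v f, of n] S_0 by blast
    then show "\<exists>n. (DL D ^^ n) f = 0" by blast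
  qed
  then have "divg (DL D) = 0" by (rule LND_div0[OF sder_DL[OF v]])
  then show ?thesis using v by (simp add: PDV_def)
qed

lemma divg_vals: "divg \<Delta> = Dz (\<Delta> Zv) + Ee (\<Delta> Tt * Ti)" by (simp add: divg_def alp_def bet_def)

lemma PDV_zero: "PDV vf_zero"
proof -
  have v: "is_vfield p vf_zero" using VF_vfield[OF sder_zero] by (simp add: VF_zero)
  have "DL vf_zero h = 0" if "h \<in> S" for h using DL_VF[OF sder_zero that] by (simp add: VF_zero)
  then show ?thesis using v by (simp add: PDV_def divg_vals S_Zv S_Tt)
qed

lemma PDV_add: "PDV D \<Longrightarrow> PDV E \<Longrightarrow> PDV (vf_add D E)"
proof -
  assume D: "PDV D" and E: "PDV E"
  then have vD: "is_vfield p D" and vE: "is_vfield p E" by (simp_all add: PDV_def)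
  have eq: "vf_add D E = VF (\<lambda>h. DL D h + DL E h)"
    using VF_add[OF sder_DL[OF vD] sder_DL[OF vE]] by (simp add: VF_DL[OF vD] VF_DL[OF vE])
  have sd: "sder (\<lambda>h. DL D h + DL E h)" by (rule sder_sum[OF sder_DL[OF vD] sder_DL[OF vE]])
  have v: "is_vfield p (vf_add D E)" unfolding eq by (rule VF_vfield[OF sd])
  have dl: "DL (vf_add D E) h = DL D h + DL E h" if "h \<in> S" for h unfolding eq by (rule DL_VF[OF sd that])
  have "divg (DL (vf_add D E)) = divg (DL D) + divg (DL E)"
    by (simp add: divg_vals dl S_Zv S_Tt Dz_add Ee_add distrib_right)
  then show ?thesis using D E v by (simp add: PDV_def)
qed

lemma Dz_Pz_mult: "Dz (Pz [:c:] * u) = Pz [:c:] * Dz u" by (simp add: Dz_mult Dz_Pz)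
lemma Ee_Pz_mult: "Ee (Pz [:c:] * u) = Pz [:c:] * Ee u" by (simp add: Ee_mult)

lemma PDV_smult: "PDV D \<Longrightarrow> PDV (vf_smult c D)"
proof -
  assume D: "PDV D"
  then have vD: "is_vfield p D" by (simp add: PDV_def)
  have eq: "vf_smult c D = VF (\<lambda>h. Pz [:c:] * DL D h)"
    using VF_smult[OF sder_DL[OF vD]] by (simp add: VF_DL[OF vD])
  have sd: "sder (\<lambda>h. Pz [:c:] * DL D h)" by (rule sder_scale[OF sder_DL[OF vD]])
  have v: "is_vfield p (vf_smult c D)" unfolding eq by (rule VF_vfield[OF sd])
  have dl: "DL (vf_smult c D) h = Pz [:c:] * DL D h" if "h \<in> S" for h unfolding eq by (rule DL_VF[OF sd that])
  have "divg (DL (vf_smult c D)) = Pz [:c:] * divg (DL D)"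
    by (simp add: divg_vals dl S_Zv S_Tt Dz_Pz_mult mult.assoc Ee_Pz_mult distrib_left)
  then show ?thesis using D v by (simp add: PDV_def)
qed

lemma PDV_HAM: "h \<in> S \<Longrightarrow> PDV (HAM h)"
proof -
  assume h: "h \<in> S"
  have "divg (DL (HAM h)) = Dz (pb h Zv) + Ee (pb h Tt * Ti)"
    by (simp add: divg_vals DL_HAM h S_Zv S_Tt)
  also have "\<dots> = 0" by (simp add: pb_Zv pb_Tt mult.assoc Tt_Ti Dz_uminus Ee_Dz)
  finally show ?thesis using HAM_vfield[OF h] by (simp add: PDV_def)
qed

lemma PDV_bracket: "PDV D \<Longrightarrow> PDV E \<Longrightarrow> \<exists>h\<in>S. vf_bracket D E = HAM h"
proof -
  assume D: "PDV D" and E: "PDV E"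
  then have vD: "is_vfield p D" and vE: "is_vfield p E" by (simp_all add: PDV_def)
  let ?h = "alp (DL D) * bet (DL E) - alp (DL E) * bet (DL D)"
  have z: "divg (DL D) = 0" "divg (DL E) = 0" using D E by (simp_all add: PDV_def)
  note pb = PD_bracket[OF sder_DL[OF vD] sder_DL[OF vE] z]
  have "vf_bracket D E = VF (\<lambda>h. DL D (DL E h) - DL E (DL D h))"
    using VF_bracket[OF sder_DL[OF vD] sder_DL[OF vE]] by (simp add: VF_DL[OF vD] VF_DL[OF vE])
  also have "\<dots> = VF (pb ?h)" by (rule VF_cong) (rule pb(2))
  finally show ?thesis using pb(1) by (auto simp: HAM_def)
qed

lemma L_PDV: "D \<in> lie_lnd p \<Longrightarrow> PDV D"
proof (induct rule: lie_lnd.induct)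
  case (ll_gen D) then show ?case by (rule PDV_lnd)
next
  case ll_zero then show ?case by (rule PDV_zero)
next
  case (ll_add D E) then show ?case by (simp add: PDV_add)
next
  case (ll_smult D c) then show ?case by (simp add: PDV_smult)
next
  case (ll_bracket D E)
  then obtain h where "h \<in> S" "vf_bracket D E = HAM h" using PDV_bracket by blast
  then show ?case using PDV_HAM by simp
qed

lemma derived_HAM: "a \<in> derived (lie_lnd p) \<Longrightarrow> \<exists>h\<in>S. a = HAM h"
proof (induct rule: derived.induct)
  case (der_br D E) then show ?case using PDV_bracket L_PDV by blast
next
  case der_zero then show ?case using HAM_zero S_0 by metis
next
  case (der_add D E)
  then obtain a b where "a \<in> S" "b \<in> S" "D = HAM a" "E = HAM b" by blast
  then show ?case using HAM_add S_add by metis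
next
  case (der_smult D c)
  then obtain a where "a \<in> S" "D = HAM a" by blast
  then show ?case using HAM_smult S_mult S_Pz by metis
qed

end

lemma antideriv: "\<exists>B. pderiv B = (b :: 'a::field_char_0 poly)"
proof -
  define B where "B = (\<Sum>i\<le>degree b. monom (coeff b i / of_nat (Suc i)) (Suc i))"
  have ps: "pderiv (\<Sum>i\<in>A. f i) = (\<Sum>i\<in>A. pderiv (f i))" for A and f :: "nat \<Rightarrow> 'a poly"
    by (induct A rule: infinite_finite_induct) (simp_all add: pderiv_add)
  have "pderiv B = (\<Sum>i\<le>degree b. pderiv (monom (coeff b i / of_nat (Suc i)) (Suc i)))"
    unfolding B_def by (rule ps)
  also have "\<dots> = (\<Sum>i\<le>degree b. monom (coeff b i) i)"
    by (rule sum.cong) (simp_all add: pderiv_monom del: of_nat_Suc)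
  also have "\<dots> = b" by (rule poly_as_sum_of_monoms)
  finally show ?thesis by blast
qed

context dp begin

definition W :: "'a lr \<Rightarrow> bool" where "W h \<longleftrightarrow> h \<in> S \<and> HAM h \<in> lie_lnd p"

lemma W_add: "W a \<Longrightarrow> W b \<Longrightarrow> W (a + b)"
  unfolding W_def using HAM_add S_add lie_lnd.ll_add by metis
lemma W_smult: "W a \<Longrightarrow> W (Pz [:c:] * a)"
  unfolding W_def using HAM_smult S_mult S_Pz lie_lnd.ll_smult by metis
lemma W_pb: "W a \<Longrightarrow> W b \<Longrightarrow> W (pb a b)"
  unfolding W_def using HAM_bracket pb_S lie_lnd.ll_bracket by metis
lemma W_const: "W (Pz [:c:])"
  unfolding W_def using HAM_const S_Pz lie_lnd.ll_zero by metis
lemma W_uminus: "W a \<Longrightarrow> W (- a)"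
  using W_smult[of a "-1"] by (simp only: Pz_m1)
lemma W_diff: "W a \<Longrightarrow> W b \<Longrightarrow> W (a - b)"
  using W_add[of a "- b"] W_uminus by simp
lemma W_Tt_pow: "W (Tt ^ Suc k)"
  unfolding W_def using HAM_Tt_lnd lie_lnd.ll_gen S_power S_Tt by blast
lemma W_Yv_pow: "W (Yv ^ Suc k)"
  unfolding W_def using HAM_Yv_lnd lie_lnd.ll_gen S_power S_Yv by blast
lemma W_Tt: "W Tt" using W_Tt_pow[of 0] by simp
lemma W_Yv: "W Yv" using W_Yv_pow[of 0] by simp

lemma Pz_inv: "c \<noteq> 0 \<Longrightarrow> Pz [:1/c:] * (Pz [:c:] * x) = (x :: 'a lr)"
  by (simp add: mult.assoc[symmetric] Pz_mult[symmetric])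

lemma W_solve:
  assumes "W a" "W b" "c \<noteq> 0" "a = Pz [:k:] * b + Pz [:c:] * x"
  shows "W x"
proof -
  have "x = Pz [:1/c:] * (a - Pz [:k:] * b)" using assms(3,4) by (simp add: Pz_inv)
  then show ?thesis using assms(1,2) by (simp add: W_smult W_diff)
qed

lemma Pz_p': "Pz (pderiv p) = Pz [:c1:] * 1 + Pz [:2 * ca:] * Zv"
proof -
  have "Pz (pderiv p) = Pz ([:c1:] + [:2 * ca:] * [:0, 1:])" by (simp add: pderiv_p)
  also have "\<dots> = Pz [:c1:] + Pz [:2 * ca:] * Zv" by (simp only: Pz_add Pz_mult Zv_def)
  finally show ?thesis by simp
qed

lemma W_Zv: "W Zv"
proof -
  have "W (- pb Tt Yv)" by (intro W_uminus W_pb W_Tt W_Yv)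
  then have "W (Pz (pderiv p))" by (simp add: pb_Tt_Yv)
  moreover have "2 * ca \<noteq> 0" using ca_nz by simp
  moreover have "W 1" using W_const[of 1] by simp
  ultimately show ?thesis using W_solve[of "Pz (pderiv p)" 1 "2 * ca" c1 Zv] Pz_p' by blast
qed

lemma W_TtZv: "W (Tt * Zv)"
proof -
  have "pb (Tt ^ Suc 1) Yv = of_nat 2 * Tt * pb Tt Yv" by (simp only: pb_power1) simp
  moreover have "Pz [:-2:] = - (2 :: 'a lr)"
  proof -
    have "Pz [:-2::'a:] = - Pz [:2:]" by (simp add: Pz_uminus[symmetric])
    moreover have "Pz [:2::'a:] = 2" by (simp add: Pz_def numeral_poly[symmetric])
    ultimately show ?thesis by simp
  qed
  ultimately have e: "pb (Tt ^ Suc 1) Yv = Pz [:-2:] * (Tt * Pz (pderiv p))"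
    by (simp add: pb_Tt_Yv)
  have "W (pb (Tt ^ Suc 1) Yv)" by (intro W_pb W_Tt_pow W_Yv)
  then have "W (Pz [:1/(-2):] * (Pz [:-2:] * (Tt * Pz (pderiv p))))" unfolding e by (rule W_smult)
  moreover have ne: "(-2::'a) \<noteq> 0" by simp
  ultimately have "W (Tt * Pz (pderiv p))" unfolding Pz_inv[OF ne] by blast
  moreover have "Tt * Pz (pderiv p) = Pz [:c1:] * Tt + Pz [:2 * ca:] * (Tt * Zv)"
    by (simp add: Pz_p' algebra_simps)
  moreover have "2 * ca \<noteq> 0" using ca_nz by simp
  ultimately show ?thesis using W_solve[OF _ W_Tt] by blast
qed


lemma pb_TtPz_YvPz: "pb (Tt * Pz a) (Yv * Pz b) = - Pz (pderiv (a * b * p))"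
proof -
  have "pb (Tt * Pz a) (Yv * Pz b) = - ((Tt * Yv) * (Pz (pderiv a) * Pz b + Pz a * Pz (pderiv b)) + (Tt * Dz Yv) * (Pz a * Pz b))"
    by (simp add: pb_def Dz_mult Ee_mult Dz_Pz algebra_simps)
  also have "\<dots> = - Pz (p * (pderiv a * b + a * pderiv b) + pderiv p * (a * b))"
    by (simp add: Tt_Yv Tt_DzYv Pz_mult Pz_add)
  also have "p * (pderiv a * b + a * pderiv b) + pderiv p * (a * b) = pderiv (a * b * p)"
    by (simp add: pderiv_mult algebra_simps)
  finally show ?thesis .
qed

definition P :: "'a poly \<Rightarrow> bool" where "P q \<longleftrightarrow> W (Pz q)"

lemma P_add: "P a \<Longrightarrow> P b \<Longrightarrow> P (a + b)" by (simp add: P_def Pz_add W_add)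
lemma P_smult: "P a \<Longrightarrow> P (smult c a)"
proof -
  assume "P a"
  moreover have "smult c a = [:c:] * a" by simp
  ultimately show ?thesis by (simp only: P_def Pz_mult W_smult)
qed
lemma P_const: "P [:c:]" by (simp add: P_def W_const)
lemma P_sum: "(\<And>i. i \<in> A \<Longrightarrow> P (f i)) \<Longrightarrow> P (\<Sum>i\<in>A. f i)"
  by (induct A rule: infinite_finite_induct) (simp_all add: P_add P_const[of 0, simplified])

lemma W_TtPz: "P A \<Longrightarrow> W (Tt * Pz (pderiv A))"
proof -
  assume "P A"
  then have "W (pb (Pz A) Tt)" by (simp add: P_def W_pb W_Tt)
  then show ?thesis by (simp add: pb_Pz1 mult.commute)
qed

lemma W_YvPz: "P B \<Longrightarrow> W (Yv * Pz (pderiv B))"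
proof -
  assume "P B"
  then have "W (- pb (Pz B) Yv)" by (simp add: P_def W_pb W_Yv W_uminus)
  then show ?thesis by (simp add: pb_Pz1 mult.commute)
qed

lemma p_monoms: "p = monom c0 0 + monom c1 1 + monom ca 2"
  by (subst p_expl) (simp add: monom_altdef numeral_2_eq_2 algebra_simps)

lemma monom_1_1: "monom (1::'a) 1 = [:0, 1:]" by (simp add: monom_Suc)
lemma monom_1_1': "monom (1::'a) (Suc 0) = [:0, 1:]" by (simp add: monom_Suc)

lemma P_monom_of: "P (monom 1 n) \<Longrightarrow> P (monom c n)"
  using P_smult[of "monom 1 n" c] by (simp add: smult_monom)

lemma P_diff: "P a \<Longrightarrow> P b \<Longrightarrow> P (a - b)"
  using P_add[of a "smult (-1) b"] P_smult[of b "-1"] by simp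

lemma P_monom1: "P (monom 1 n) \<and> P (monom 1 (Suc n))"
proof (induct n)
  case 0
  have "P (monom 1 0)" using P_const[of 1] by (simp add: monom_0 one_pCons)
  moreover have "P (monom 1 1)" using W_Zv by (simp add: P_def monom_1_1' Zv_def)
  ultimately show ?case by simp
next
  case (Suc k)
  then have Pk: "P (monom 1 k)" and Pk1: "P (monom 1 (Suc k))" by auto
  have pd: "pderiv (monom (1 / of_nat (Suc k)) (Suc k)) = monom (1::'a) k"
    by (simp add: pderiv_monom del: of_nat_Suc)
  have "P (monom (1 / of_nat (Suc k)) (Suc k))"
    using P_smult[OF Pk1, of "1 / of_nat (Suc k)"] by (simp add: smult_monom)
  then have Y: "W (Yv * Pz (monom 1 k))" using W_YvPz pd by fastforce
  have T: "W (Tt * Pz (monom 1 1))" using W_TtZv by (simp add: monom_1_1' Zv_def)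
  have "W (pb (Tt * Pz (monom 1 1)) (Yv * Pz (monom 1 k)))" by (rule W_pb[OF T Y])
  then have "W (- Pz (pderiv (monom 1 1 * monom 1 k * p)))" by (simp only: pb_TtPz_YvPz)
  then have "W (- (- Pz (pderiv (monom 1 1 * monom 1 k * p))))" by (rule W_uminus)
  then have W1: "P (pderiv (monom 1 (Suc k) * p))"
    by (simp add: P_def mult_monom)
  have e: "pderiv (monom 1 (Suc k) * p) = monom (of_nat (Suc k) * c0) k + monom (of_nat (Suc (Suc k)) * c1) (Suc k) + monom (of_nat (Suc (Suc (Suc k))) * ca) (Suc (Suc k))"
  proof -
    have "monom 1 (Suc k) * p = monom c0 (Suc k) + monom c1 (Suc (Suc k)) + monom ca (Suc (Suc (Suc k)))"
      by (subst p_monoms) (simp only: distrib_left mult_monom mult_1 add_0_right, simp)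
    then show ?thesis by (simp only: pderiv_add pderiv_monom diff_Suc_1)
  qed
  have "P (monom (of_nat (Suc (Suc (Suc k))) * ca) (Suc (Suc k)))"
  proof -
    have "P (pderiv (monom 1 (Suc k) * p) - monom (of_nat (Suc k) * c0) k - monom (of_nat (Suc (Suc k)) * c1) (Suc k))"
      by (rule P_diff[OF P_diff[OF W1 P_monom_of[OF Pk]] P_monom_of[OF Pk1]])
    then show ?thesis unfolding e by simp
  qed
  then have "P (smult (1 / (of_nat (Suc (Suc (Suc k))) * ca)) (monom (of_nat (Suc (Suc (Suc k))) * ca) (Suc (Suc k))))"
    by (rule P_smult)
  then have "P (monom 1 (Suc (Suc k)))" using ca_nz by (simp add: smult_monom del: of_nat_Suc)
  then show ?case using Pk1 by simp
qed


lemma P_all: "P q"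
proof -
  have "P (\<Sum>i\<le>degree q. monom (coeff q i) i)"
    by (rule P_sum) (rule P_monom_of, use P_monom1 in blast)
  then show ?thesis by (simp only: poly_as_sum_of_monoms)
qed

lemma pb_Pz_sng: "pb (Pz B) (sng a c) = sng a (pderiv B * (of_int a * c))"
  by (simp add: pb_Pz1 Ee_single Pz_mult_single)

lemma W_sng_gen:
  assumes a: "a \<noteq> 0" and w: "W (sng a c)"
  shows "W (sng a (d * c))"
proof -
  obtain B where B: "pderiv B = smult (1 / of_int a) d" using antideriv by blast
  have "W (pb (Pz B) (sng a c))" using P_all[of B] w by (simp add: P_def W_pb)
  moreover have "pderiv B * (of_int a * c) = d * c" using a by (simp add: B of_int_poly)
  ultimately show ?thesis by (simp add: pb_Pz_sng)
qed

lemma W_sng: "sng a b \<in> S \<Longrightarrow> W (sng a b)"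
proof -
  assume ab: "sng a b \<in> S"
  consider "a = 0" | "a > 0" | "a < 0" by linarith
  then show ?thesis
  proof cases
    case 1 then show ?thesis using P_all[of b] by (simp add: P_def Pz_def)
  next
    case 2
    have "a = int (Suc (nat a - 1))" using 2 by simp
    then obtain k where k: "a = int (Suc k)" by blast
    have eq: "Tt ^ Suc k = sng a 1" by (simp only: Tt_power k)
    have "W (sng a 1)" unfolding eq[symmetric] by (rule W_Tt_pow)
    then show ?thesis using W_sng_gen[of a 1 b] 2 by simp
  next
    case 3
    define m where "m = nat (- a)"
    have "m = Suc (m - 1)" using 3 by (simp add: m_def)
    then obtain m' where m': "m = Suc m'" by blast
    have "p ^ m dvd b" using ab by (simp add: S_single m_def)
    then obtain b0 where "b = p ^ m * b0" by (elim dvdE)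
    then have b0: "b = b0 * p ^ m" by (simp add: mult.commute)
    have eq: "Yv ^ Suc m' = sng a (p ^ m)" using 3 by (simp only: Yv_power m'[symmetric]) (simp add: m_def)
    have "W (sng a (p ^ m))" unfolding eq[symmetric] by (rule W_Yv_pow)
    then show ?thesis using W_sng_gen[of a "p ^ m" b0] 3 by (simp add: b0)
  qed
qed

lemma W_all: "h \<in> S \<Longrightarrow> W h"
proof (induct h rule: S_induct)
  case zero then show ?case using W_const[of 0] by simp
next
  case (add f a b) then show ?case by (simp add: W_add W_sng)
qed


definition Einv :: "'a lr \<Rightarrow> 'a lr" where
  "Einv f = Abs_poly_mapping (\<lambda>n. if n = 0 then 0 else smult (1 / of_int n) (lkp f n))"

lemma lookup_Einv: "lkp (Einv f) n = (if n = 0 then 0 else smult (1 / of_int n) (lkp f n))"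
proof -
  have "finite {n. (if n = 0 then 0 else smult (1 / of_int n) (lkp f n)) \<noteq> 0}"
    by (rule finite_subset[OF _ finite_keys[of f]]) (auto simp: in_keys_iff)
  then show ?thesis unfolding Einv_def by simp
qed

lemma Einv_S: "f \<in> S \<Longrightarrow> Einv f \<in> S"
  by (auto simp: S_def lookup_Einv intro: dvd_smult)

lemma Ee_Einv: "Ee (Einv f) = f - Pz (lkp f 0)"
proof (rule poly_mapping_eqI)
  fix n
  show "lkp (Ee (Einv f)) n = lkp (f - Pz (lkp f 0)) n"
  proof (cases "n = 0")
    case True then show ?thesis by (simp add: lookup_Ee lookup_Einv lookup_minus Pz_def)
  next
    case False
    then show ?thesis by (simp add: lookup_Ee lookup_Einv lookup_minus Pz_def lookup_single of_int_poly)
  qed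
qed

lemma pderiv_deg1: "degree (R :: 'a poly) \<le> 1 \<Longrightarrow> pderiv R = [:coeff R 1:]"
proof (rule poly_eqI)
  fix n assume d: "degree R \<le> 1"
  show "coeff (pderiv R) n = coeff [:coeff R 1:] n"
  proof (cases n)
    case 0 then show ?thesis by (simp add: coeff_pderiv)
  next
    case (Suc m)
    then have "coeff R (Suc n) = 0" using d by (intro coeff_eq_0) simp
    then show ?thesis using Suc by (simp add: coeff_pderiv)
  qed
qed

lemma weight0: "\<exists>q c. pb (- Tt) (Yv * Pz q) = Pz r - Pz [:c:]"
proof -
  obtain R where R: "pderiv R = r" using antideriv by blast
  define q where "q = R div p"
  define Rm where "Rm = R mod p"
  have Rq: "R = q * p + Rm" by (simp add: q_def Rm_def)
  have pnz: "p \<noteq> 0" using deg2 by auto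
  have "degree Rm \<le> 1"
  proof (cases "Rm = 0")
    case True then show ?thesis by simp
  next
    case False then have "degree Rm < degree p" using degree_mod_less'[OF pnz] by (simp add: Rm_def)
    then show ?thesis using deg2 by simp
  qed
  then have dRm: "pderiv Rm = [:coeff Rm 1:]" by (rule pderiv_deg1)
  have "pderiv (p * q) = r - [:coeff Rm 1:]"
  proof -
    have "p * q = R - Rm" using Rq by (simp add: mult.commute)
    then show ?thesis by (simp add: pderiv_diff R dRm)
  qed
  moreover have "pb (- Tt) (Yv * Pz q) = Pz (pderiv (p * q))"
  proof -
    have "pb (- Tt) (Yv * Pz q) = (Tt * Dz Yv) * Pz q + (Tt * Yv) * Pz (pderiv q)"
      by (simp add: pb_uminus1 pb_Tt_left Dz_mult Dz_Pz algebra_simps)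
    also have "\<dots> = Pz (pderiv (p * q))" by (simp add: Tt_DzYv Tt_Yv Pz_mult[symmetric] Pz_add[symmetric] pderiv_mult algebra_simps)
    finally show ?thesis .
  qed
  ultimately show ?thesis by (simp add: Pz_diff) blast
qed

lemma decomp: "h \<in> S \<Longrightarrow> \<exists>g q c. g \<in> S \<and> h = pb Zv g + pb (- Tt) (Yv * Pz q) + Pz [:c:]"
proof -
  assume h: "h \<in> S"
  obtain q c where qc: "pb (- Tt) (Yv * Pz q) = Pz (lkp h 0) - Pz [:c:]" using weight0 by blast
  have "pb Zv (Einv h) = h - Pz (lkp h 0)" by (simp add: pb_def Ee_Einv)
  then have "h = pb Zv (Einv h) + pb (- Tt) (Yv * Pz q) + Pz [:c:]" unfolding qc by (simp add: algebra_simps)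
  then show ?thesis using Einv_S[OF h] by blast
qed

lemma vf_add_zero: "vf_add X vf_zero = X" by (simp add: vf_add_def vf_zero_def)

lemma W_L: "h \<in> S \<Longrightarrow> HAM h \<in> lie_lnd p" using W_all W_def by blast

theorem main: "bracket_width_le (lie_lnd p) 2"
  unfolding bracket_width_le_def
proof
  fix a assume "a \<in> derived (lie_lnd p)"
  then obtain h where h: "h \<in> S" "a = HAM h" using derived_HAM by blast
  obtain g q c where gqc: "g \<in> S" "h = pb Zv g + pb (- Tt) (Yv * Pz q) + Pz [:c:]" using decomp[OF h(1)] by blast
  define B where "B = (\<lambda>i::nat. if i = 0 then HAM Zv else HAM (- Tt))"
  define C where "C = (\<lambda>i::nat. if i = 0 then HAM g else HAM (Yv * Pz q))"
  have S2: "Yv * Pz q \<in> S" "- Tt \<in> S" using S_mult S_Yv S_Pz S_uminus S_Tt by auto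
  have BC: "\<forall>i<2. B i \<in> lie_lnd p \<and> C i \<in> lie_lnd p"
    using W_L S_Zv S2 gqc(1) by (auto simp: B_def C_def)
  have up: "[0..<2] = [0::nat, 1]" by (simp add: upt_rec)
  have eq: "foldr (\<lambda>i acc. vf_add (vf_bracket (B i) (C i)) acc) [0..<2] vf_zero
      = vf_add (vf_bracket (HAM Zv) (HAM g)) (vf_bracket (HAM (- Tt)) (HAM (Yv * Pz q)))"
    by (simp add: up B_def C_def vf_add_zero)
  also have "\<dots> = HAM (pb Zv g + pb (- Tt) (Yv * Pz q))"
    using gqc(1) S2 S_Zv by (simp add: HAM_bracket HAM_add pb_S)
  also have "\<dots> = HAM h" by (simp only: gqc(2) HAM_diff_const)
  finally have eq2: "a = foldr (\<lambda>i acc. vf_add (vf_bracket (B i) (C i)) acc) [0..<2] vf_zero"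
    using h(2) by simp
  show "\<exists>B C. (\<forall>i<2. B i \<in> lie_lnd p \<and> C i \<in> lie_lnd p) \<and>
        a = foldr (\<lambda>i acc. vf_add (vf_bracket (B i) (C i)) acc) [0..<2] vf_zero"
    by (intro exI conjI, rule BC, rule eq2)
qed

end

theorem proposition4p10:
  fixes p :: "'a::field_char_0 poly"
  assumes "alg_closed TYPE('a)"
    and "degree p = 2"
    and "rsquarefree p"
  shows "bracket_width_le (lie_lnd p) 2"
proof -
  interpret dp p using assms(2,3) by unfold_locales
  show ?thesis by (rule main)
qed

end
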